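(* Fix $p\in(0,1)$ and consider the Markov chain $(\eta_t)_{t\ge0}$ on $[0,1]^{\mathbb N}$ described in the context. It has a unique stationary distribution $\pi_p$, and $\pi_p$ is given by $$\pi_p\Big(\eta\in[0,1]^{\mathbb N}:\bigcap_{n=1}^N\{0\le\eta(n)\le u_n\}\Big)=E\Big[\prod_{n=1}^N\Theta_\infty(u_n)\Big]$$ for every $N\in\mathbb N$ and every $(u_1,\dots,u_N)\in[0,1]^N$, where $\Theta_\infty$ is the random function defined in the context.
   Context: The chain: let $(B_t)_{t\ge1}$ be IID Bernoulli($p$) and $(U_t(n))_{t\ge1,n\in\mathbb N}$ IID uniform on $[0,1]$, independent of the $B$'s. For $\eta_t\in[0,1]^{\mathbb N}$, set $\eta_{t+1}(n)=\max(\eta_t(n),U_{t+1}(n))$ for all $n$ if $B_{t+1}=1$ and $\eta_{t+1}(n)=\min(\eta_t(n),U_{t+1}(n))$ for all $n$ if $B_{t+1}=0$. The random function $\Theta_\infty$: let $G_0,G_1,\dots$ be IID with $P(G_0=n)=p^{n-1}(1-p)$, $n\ge1$, let $T_k=G_0+\dots+G_k$, and set $\Theta_\infty(u)=\sum_{k=0}^\infty u^{T_k}\left(\frac{1-u}{u}\right)^k$ for $u\in(0,1)$, $\Theta_\infty(0)=0$, $\Theta_\infty(1)=1$. *)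

theory Defs
  imports "HOL-Probability.Probability"
begin

definition state_space :: "(nat \<Rightarrow> real) measure" where
  "state_space = (\<Pi>\<^sub>M n\<in>(UNIV::nat set). restrict_space borel {0..1::real})"

definition unif_seq :: "(nat \<Rightarrow> real) measure" where
  "unif_seq = (\<Pi>\<^sub>M n\<in>(UNIV::nat set). uniform_measure lborel {0..1::real})"

definition trans_prob :: "real \<Rightarrow> (nat \<Rightarrow> real) \<Rightarrow> (nat \<Rightarrow> real) set \<Rightarrow> ennreal" where
  "trans_prob p \<eta> A =
     ennreal p * emeasure unif_seq {U \<in> space unif_seq. (\<lambda>n. max (\<eta> n) (U n)) \<in> A}
   + ennreal (1 - p) * emeasure unif_seq {U \<in> space unif_seq. (\<lambda>n. min (\<eta> n) (U n)) \<in> A}"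

definition stationary :: "real \<Rightarrow> (nat \<Rightarrow> real) measure \<Rightarrow> bool" where
  "stationary p \<pi> \<longleftrightarrow> prob_space \<pi> \<and> sets \<pi> = sets state_space \<and>
     (\<forall>A \<in> sets state_space. emeasure \<pi> A = (\<integral>\<^sup>+ \<eta>. trans_prob p \<eta> A \<partial>\<pi>))"

text \<open>Law of G: P(G = n) = p^(n-1) (1-p) for n >= 1.\<close>
definition G_pmf :: "real \<Rightarrow> nat pmf" where
  "G_pmf p = map_pmf Suc (geometric_pmf (1 - p))"

definition G_space :: "real \<Rightarrow> (nat \<Rightarrow> nat) measure" where
  "G_space p = (\<Pi>\<^sub>M k\<in>(UNIV::nat set). measure_pmf (G_pmf p))"

definition T_seq :: "(nat \<Rightarrow> nat) \<Rightarrow> nat \<Rightarrow> nat" where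
  "T_seq G k = (\<Sum>i\<le>k. G i)"

definition Theta_inf :: "(nat \<Rightarrow> nat) \<Rightarrow> real \<Rightarrow> real" where
  "Theta_inf G u =
     (if u = 0 then 0 else if u = 1 then 1
      else (\<Sum>k. u ^ T_seq G k * ((1 - u) / u) ^ k))"

end

theory Submission
  imports Defs
begin

definition restr :: "nat set \<Rightarrow> (nat \<Rightarrow> real) \<Rightarrow> nat \<Rightarrow> real" where
  "restr S u = (\<lambda>n. if n \<in> S then u n else 1)"

definition wS :: "nat \<Rightarrow> (nat \<Rightarrow> real) \<Rightarrow> nat set \<Rightarrow> real" where
  "wS N u S = (\<Prod>n\<in>{..<N}-S. u n) * (\<Prod>n\<in>S. 1 - u n)"

definition is_rec :: "real \<Rightarrow> nat \<Rightarrow> ((nat \<Rightarrow> real) \<Rightarrow> real) \<Rightarrow> bool" where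
  "is_rec p N F \<longleftrightarrow>
     (\<forall>u v. (\<forall>n<N. u n = v n) \<longrightarrow> F u = F v) \<and>
     (\<forall>u. (\<forall>n<N. u n = 1) \<longrightarrow> F u = 1) \<and>
     (\<forall>u. (\<forall>n<N. 0 \<le> u n \<and> u n \<le> 1) \<longrightarrow>
        F u = p * (\<Prod>n<N. u n) * F u + (1-p) * (\<Sum>S\<in>Pow {..<N}. wS N u S * F (restr S u)))"

lemma alg_step:
  fixes a1 a2 b1 b2 sd p P :: real
  shows "a1 = p*P*a1 + (1-p) * b1 \<Longrightarrow> a2 = p*P*a2 + (1-p) * b2 \<Longrightarrow> sd = b1 - b2 \<Longrightarrow> a1 - a2 = p*P*(a1-a2) + (1-p) * sd"
  by algebra

lemma rec_unique_aux:
  assumes p: "0 < p" "p < 1" and R1: "is_rec p N F1" and R2: "is_rec p N F2"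
  shows "card {n. n<N \<and> u n \<noteq> 1} = k \<Longrightarrow> (\<forall>n<N. 0 \<le> u n \<and> u n \<le> 1) \<Longrightarrow> F1 u = F2 u"
proof (induction k arbitrary: u rule: less_induct)
  case (less k u)
  define K where "K = {n. n<N \<and> u n \<noteq> 1}"
  have finK: "finite K" unfolding K_def by auto
  have KN: "K \<subseteq> {..<N}" unfolding K_def by auto
  show ?case
  proof (cases "K = {}")
    case True
    then have "\<forall>n<N. u n = 1" unfolding K_def by auto
    then show ?thesis using R1 R2 unfolding is_rec_def by metis
  next
    case False
    then obtain k0 where k0: "k0 \<in> K" by auto
    define D where "D v = F1 v - F2 v" for v
    have zero: "wS N u S * D (restr S u) = 0" if S: "S \<in> Pow {..<N}" "S \<noteq> K" for S
    proof (cases "S \<subseteq> K")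
      case True
      then have "S \<subset> K" using S by auto
      have Kr: "{n. n<N \<and> restr S u n \<noteq> 1} = S" using True unfolding restr_def K_def by auto
      have "card S < card K" using \<open>S \<subset> K\<close> finK by (simp add: psubset_card_mono)
      moreover have "\<forall>n<N. 0 \<le> restr S u n \<and> restr S u n \<le> 1" using less.prems(2) unfolding restr_def by auto
      ultimately have "F1 (restr S u) = F2 (restr S u)"
        using less.IH[of "card S" "restr S u"] less.prems(1) Kr K_def by auto
      then show ?thesis unfolding D_def by simp
    next
      case False
      then obtain n where n: "n \<in> S" "n \<notin> K" by auto
      then have "n < N" "u n = 1" using S unfolding K_def by auto
      then have "(\<Prod>n\<in>S. 1 - u n) = 0" using n(1) S finite_subset[of S "{..<N}"] by (intro prod_zero) auto
      then show ?thesis unfolding wS_def by simp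
    qed
    have sumeq: "(\<Sum>S\<in>Pow {..<N}. wS N u S * D (restr S u)) = wS N u K * D (restr K u)"
      using KN by (subst sum.remove[of _ K]) (auto intro!: sum.neutral zero)
    have "\<forall>n<N. restr K u n = u n" unfolding restr_def K_def by auto
    then have "D (restr K u) = D u" using R1 R2 unfolding is_rec_def D_def by (metis (no_types))
    moreover have "wS N u K = (\<Prod>n\<in>K. 1 - u n)"
    proof -
      have "(\<Prod>n\<in>{..<N}-K. u n) = 1" by (rule prod.neutral) (auto simp: K_def)
      then show ?thesis unfolding wS_def by simp
    qed
    ultimately have sumeq2: "(\<Sum>S\<in>Pow {..<N}. wS N u S * D (restr S u)) = (\<Prod>n\<in>K. 1 - u n) * D u"
      using sumeq by simp
    have "D u = p * (\<Prod>n<N. u n) * D u + (1-p) * (\<Sum>S\<in>Pow {..<N}. wS N u S * D (restr S u))"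
    proof -
      have r1: "F1 u = p * (\<Prod>n<N. u n) * F1 u + (1-p) * (\<Sum>S\<in>Pow {..<N}. wS N u S * F1 (restr S u))"
        using R1 less.prems(2) unfolding is_rec_def by blast
      have r2: "F2 u = p * (\<Prod>n<N. u n) * F2 u + (1-p) * (\<Sum>S\<in>Pow {..<N}. wS N u S * F2 (restr S u))"
        using R2 less.prems(2) unfolding is_rec_def by blast
      have "(\<Sum>S\<in>Pow {..<N}. wS N u S * D (restr S u)) = (\<Sum>S\<in>Pow {..<N}. wS N u S * F1 (restr S u)) - (\<Sum>S\<in>Pow {..<N}. wS N u S * F2 (restr S u))"
        unfolding D_def by (simp add: sum_subtractf right_diff_distrib)
      then show ?thesis unfolding D_def using alg_step[OF r1 r2] by blast
    qed
    then have eq: "D u = (p * (\<Prod>n<N. u n) + (1-p) * (\<Prod>n\<in>K. 1 - u n)) * D u"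
      using sumeq2 by (simp add: algebra_simps)
    have uk: "0 \<le> u k0" "u k0 < 1" "k0 < N" using k0 less.prems(2) unfolding K_def by auto
    have b01: "\<And>n. n<N \<Longrightarrow> 0 \<le> u n \<and> u n \<le> 1" using less.prems(2) by auto
    have "(\<Prod>n<N. u n) = u k0 * (\<Prod>n\<in>{..<N}-{k0}. u n)" using uk by (subst prod.remove) auto
    also have "\<dots> \<le> u k0" using uk b01 by (intro mult_left_le prod_le_1) auto
    finally have P1: "(\<Prod>n<N. u n) \<le> u k0" .
    have "(\<Prod>n\<in>K. 1 - u n) = (1 - u k0) * (\<Prod>n\<in>K-{k0}. 1 - u n)" using k0 finK by (subst prod.remove) auto
    also have "\<dots> \<le> 1 - u k0" using uk b01 KN by (intro mult_left_le prod_le_1) auto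
    finally have P2: "(\<Prod>n\<in>K. 1 - u n) \<le> 1 - u k0" .
    have "p * (\<Prod>n<N. u n) + (1-p) * (\<Prod>n\<in>K. 1 - u n) \<le> p * u k0 + (1-p) * (1 - u k0)"
      using P1 P2 p by (intro add_mono mult_left_mono) auto
    also have "\<dots> = 1 - p * (1 - u k0) - (1 - p) * u k0" by (simp add: algebra_simps)
    also have "\<dots> < 1"
    proof -
      have "0 < p * (1 - u k0)" using p uk by simp
      moreover have "0 \<le> (1 - p) * u k0" using p uk by simp
      ultimately show ?thesis by linarith
    qed
    finally have "p * (\<Prod>n<N. u n) + (1-p) * (\<Prod>n\<in>K. 1 - u n) \<noteq> 1" by simp
    with eq have "D u = 0"
      by (metis mult_cancel_right2)
    then show ?thesis unfolding D_def by simp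
  qed
qed

lemma rec_unique:
  assumes "0 < p" "p < 1" "is_rec p N F1" "is_rec p N F2" "\<forall>n<N. 0 \<le> u n \<and> u n \<le> 1"
  shows "F1 u = F2 u"
  using rec_unique_aux[OF assms(1-4) refl assms(5)] .

lemma space_ss: "space state_space = {\<eta>. \<forall>n. 0 \<le> \<eta> n \<and> \<eta> n \<le> 1}"
  unfolding state_space_def by (auto simp: space_PiM space_restrict_space PiE_def extensional_def)

lemma sets_ss_eq: "sets \<pi> = sets state_space \<Longrightarrow> space \<pi> = space state_space"
  by (rule sets_eq_imp_space_eq)

definition orth :: "nat \<Rightarrow> (nat \<Rightarrow> real) \<Rightarrow> (nat \<Rightarrow> real) set" where
  "orth N u = {\<eta> \<in> space state_space. \<forall>n<N. 0 \<le> \<eta> n \<and> \<eta> n \<le> u n}"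

lemma orth_sets[measurable]: "orth N u \<in> sets state_space"
proof -
  have "orth N u = {\<eta> \<in> space state_space. \<forall>n\<in>{..<N}. \<eta> n \<in> {0..u n}}"
    unfolding orth_def by auto
  also have "\<dots> \<in> sets state_space" unfolding state_space_def
    by (intro sets.sets_Collect_finite_All sets_Collect_single') (auto simp: sets_restrict_space_iff space_restrict_space)
  finally show ?thesis .
qed

definition unif :: "real measure" where "unif = uniform_measure lborel {0..1::real}"

lemma unif_prob: "prob_space unif"
  unfolding unif_def by (rule prob_space_uniform_measure) auto

lemma unif_seq_eq: "unif_seq = (\<Pi>\<^sub>M n\<in>(UNIV::nat set). unif)"
  unfolding unif_seq_def unif_def ..

interpretation US: product_prob_space "\<lambda>_. unif" "UNIV :: nat set"
  by (simp add: product_prob_space_def product_sigma_finite_def unif_prob prob_space_imp_sigma_finite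
    product_prob_space_axioms_def)

lemma emeasure_unif_atMost: "0 \<le> a \<Longrightarrow> a \<le> 1 \<Longrightarrow> emeasure unif {..a} = ennreal a"
  unfolding unif_def
  by (subst emeasure_uniform_measure) (auto simp: Int_atMost divide_ennreal_def)

lemma emeasure_unif_UNIV: "emeasure unif UNIV = 1"
  using prob_space.emeasure_space_1[OF unif_prob] by (simp add: unif_def)

lemma space_unif_seq: "space unif_seq = UNIV"
  unfolding unif_seq_def by (simp add: space_PiM)

lemma AE_unif01: "AE U in unif_seq. \<forall>n. 0 \<le> U n \<and> U n \<le> 1"
proof -
  have "AE x in unif. 0 \<le> x \<and> x \<le> 1" unfolding unif_def
    by (rule AE_uniform_measureI) auto
  then have "\<And>n. AE U in unif_seq. 0 \<le> U n \<and> U n \<le> 1"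
    unfolding unif_seq_eq by (intro US.AE_component) auto
  then show ?thesis by (simp add: AE_all_countable)
qed

lemma cyl_emeasure:
  assumes X: "\<And>n. n < N \<Longrightarrow> X n \<in> sets borel"
  shows "emeasure unif_seq {U \<in> space unif_seq. \<forall>n\<in>{..<N}. U n \<in> X n} = (\<Prod>n<N. emeasure unif (X n))"
  unfolding unif_seq_eq using X by (subst US.emeasure_PiM_Collect) (auto simp: unif_def)

definition amax :: "nat \<Rightarrow> (nat \<Rightarrow> real) \<Rightarrow> (nat \<Rightarrow> real) \<Rightarrow> real" where
  "amax N u \<eta> = (\<Prod>n<N. if \<eta> n \<le> u n then u n else 0)"
definition amin :: "nat \<Rightarrow> (nat \<Rightarrow> real) \<Rightarrow> (nat \<Rightarrow> real) \<Rightarrow> real" where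
  "amin N u \<eta> = (\<Prod>n<N. if \<eta> n \<le> u n then 1 else u n)"

lemma trans_max:
  assumes eta: "\<eta> \<in> space state_space" and u: "\<forall>n<N. 0 \<le> u n \<and> u n \<le> 1"
  shows "emeasure unif_seq {U \<in> space unif_seq. (\<lambda>n. max (\<eta> n) (U n)) \<in> orth N u} = ennreal (amax N u \<eta>)"
proof -
  define X where "X n = (if \<eta> n \<le> u n then {..u n} else {})" for n
  have "emeasure unif_seq {U \<in> space unif_seq. (\<lambda>n. max (\<eta> n) (U n)) \<in> orth N u}
      = emeasure unif_seq {U \<in> space unif_seq. \<forall>n\<in>{..<N}. U n \<in> X n}"
  proof (rule emeasure_eq_AE)
    show "AE x in unif_seq. (x \<in> {U \<in> space unif_seq. (\<lambda>n. max (\<eta> n) (U n)) \<in> orth N u}) =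
        (x \<in> {U \<in> space unif_seq. \<forall>n\<in>{..<N}. U n \<in> X n})"
      using AE_unif01 
    proof eventually_elim
      case (elim U)
      then show ?case using eta u unfolding orth_def space_ss X_def by (auto simp: space_unif_seq le_max_iff_disj)
    qed
    show "{U \<in> space unif_seq. (\<lambda>n. max (\<eta> n) (U n)) \<in> orth N u} \<in> sets unif_seq"
    proof -
      have "{U \<in> space unif_seq. (\<lambda>n. max (\<eta> n) (U n)) \<in> orth N u} =
        {U \<in> space unif_seq. (\<forall>n. U n \<le> 1) \<and> (\<forall>n<N. \<eta> n \<le> u n \<and> U n \<le> u n)}"
        using eta unfolding orth_def space_ss by (auto simp: le_max_iff_disj)
      also have "\<dots> \<in> sets unif_seq" unfolding unif_seq_eq by measurable (auto simp: unif_def)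
      finally show ?thesis .
    qed
    show "{U \<in> space unif_seq. \<forall>n\<in>{..<N}. U n \<in> X n} \<in> sets unif_seq"
      unfolding unif_seq_eq X_def by measurable (auto simp: unif_def)
  qed
  also have "\<dots> = (\<Prod>n<N. emeasure unif (X n))"
    by (rule cyl_emeasure) (auto simp: X_def)
  also have "\<dots> = (\<Prod>n<N. ennreal (if \<eta> n \<le> u n then u n else 0))"
    using u by (intro prod.cong) (auto simp: X_def emeasure_unif_atMost)
  also have "\<dots> = ennreal (amax N u \<eta>)" unfolding amax_def
    using u by (subst prod_ennreal) auto
  finally show ?thesis .
qed

lemma trans_min:
  assumes eta: "\<eta> \<in> space state_space" and u: "\<forall>n<N. 0 \<le> u n \<and> u n \<le> 1"
  shows "emeasure unif_seq {U \<in> space unif_seq. (\<lambda>n. min (\<eta> n) (U n)) \<in> orth N u} = ennreal (amin N u \<eta>)"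
proof -
  define X where "X n = (if \<eta> n \<le> u n then UNIV else {..u n})" for n
  have "emeasure unif_seq {U \<in> space unif_seq. (\<lambda>n. min (\<eta> n) (U n)) \<in> orth N u}
      = emeasure unif_seq {U \<in> space unif_seq. \<forall>n\<in>{..<N}. U n \<in> X n}"
  proof (rule emeasure_eq_AE)
    show "AE x in unif_seq. (x \<in> {U \<in> space unif_seq. (\<lambda>n. min (\<eta> n) (U n)) \<in> orth N u}) =
        (x \<in> {U \<in> space unif_seq. \<forall>n\<in>{..<N}. U n \<in> X n})"
      using AE_unif01 
    proof eventually_elim
      case (elim U)
      then show ?case using eta u unfolding orth_def space_ss X_def
        by (auto simp: space_unif_seq min_le_iff_disj)
    qed
    show "{U \<in> space unif_seq. (\<lambda>n. min (\<eta> n) (U n)) \<in> orth N u} \<in> sets unif_seq"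
    proof -
      have "{U \<in> space unif_seq. (\<lambda>n. min (\<eta> n) (U n)) \<in> orth N u} =
        {U \<in> space unif_seq. (\<forall>n. 0 \<le> U n) \<and> (\<forall>n<N. \<eta> n \<le> u n \<or> U n \<le> u n)}"
        using eta unfolding orth_def space_ss by (auto simp: min_le_iff_disj)
      also have "\<dots> \<in> sets unif_seq" unfolding unif_seq_eq by measurable (auto simp: unif_def)
      finally show ?thesis .
    qed
    show "{U \<in> space unif_seq. \<forall>n\<in>{..<N}. U n \<in> X n} \<in> sets unif_seq"
      unfolding unif_seq_eq X_def by measurable (auto simp: unif_def)
  qed
  also have "\<dots> = (\<Prod>n<N. emeasure unif (X n))"
    by (rule cyl_emeasure) (auto simp: X_def)
  also have "\<dots> = (\<Prod>n<N. ennreal (if \<eta> n \<le> u n then 1 else u n))"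
    using u by (intro prod.cong) (auto simp: X_def emeasure_unif_atMost emeasure_unif_UNIV)
  also have "\<dots> = ennreal (amin N u \<eta>)" unfolding amin_def
    using u by (subst prod_ennreal) auto
  finally show ?thesis .
qed

lemma trans_orth:
  assumes eta: "\<eta> \<in> space state_space" and u: "\<forall>n<N. 0 \<le> u n \<and> u n \<le> 1" and p: "0 \<le> p" "p \<le> 1"
  shows "trans_prob p \<eta> (orth N u) = ennreal (p * amax N u \<eta> + (1 - p) * amin N u \<eta>)"
proof -
  have "amax N u \<eta> \<ge> 0" "amin N u \<eta> \<ge> 0" using u unfolding amax_def amin_def by (auto intro!: prod_nonneg)
  then show ?thesis unfolding trans_prob_def trans_max[OF assms(1,2)] trans_min[OF assms(1,2)]
    using p by (simp add: ennreal_mult[symmetric] ennreal_plus[symmetric] del: ennreal_plus)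
qed

lemma amax_ind:
  assumes eta: "\<eta> \<in> space state_space"
  shows "amax N u \<eta> = (\<Prod>n<N. u n) * indicator (orth N u) \<eta>"
  using eta unfolding amax_def orth_def space_ss
  by (auto simp: indicator_def prod.distrib[symmetric] intro!: prod.cong)

lemma orth_restr_ind:
  assumes eta: "\<eta> \<in> space state_space" and S: "S \<subseteq> {..<N}"
  shows "indicator (orth N (restr S u)) \<eta> = (\<Prod>n\<in>S. indicator {..u n} (\<eta> n) :: real)"
proof -
  have fin: "finite S" using S finite_subset by blast
  have "\<eta> \<in> orth N (restr S u) \<longleftrightarrow> (\<forall>n\<in>S. \<eta> n \<le> u n)"
    using eta S unfolding orth_def space_ss restr_def by auto
  then show ?thesis using fin
    by (auto simp: indicator_def prod_zero)
qed

lemma amin_expand: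
  assumes eta: "\<eta> \<in> space state_space"
  shows "amin N u \<eta> = (\<Sum>S\<in>Pow {..<N}. wS N u S * indicator (orth N (restr S u)) \<eta>)"
proof -
  have "amin N u \<eta> = (\<Prod>n<N. (1 - u n) * indicator {..u n} (\<eta> n) + u n)"
    unfolding amin_def by (intro prod.cong) (auto simp: indicator_def)
  also have "\<dots> = (\<Sum>S\<in>Pow {..<N}. (\<Prod>n\<in>S. (1 - u n) * indicator {..u n} (\<eta> n)) * (\<Prod>n\<in>{..<N}-S. u n))"
    by (rule prod_add) simp
  also have "\<dots> = (\<Sum>S\<in>Pow {..<N}. wS N u S * indicator (orth N (restr S u)) \<eta>)"
    using eta by (intro sum.cong refl) (auto simp: wS_def orth_restr_ind prod.distrib)
  finally show ?thesis .
qed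

lemma stat_rec:
  assumes st: "stationary p \<pi>" and p: "0 < p" "p < 1"
  shows "is_rec p N (\<lambda>u. measure \<pi> (orth N u))"
proof -
  have ps: "prob_space \<pi>" and sets: "sets \<pi> = sets state_space"
    and inv: "\<And>A. A \<in> sets state_space \<Longrightarrow> emeasure \<pi> A = (\<integral>\<^sup>+ \<eta>. trans_prob p \<eta> A \<partial>\<pi>)"
    using st unfolding stationary_def by auto
  interpret prob_space \<pi> by (rule ps)
  have sp: "space \<pi> = space state_space" using sets by (rule sets_eq_imp_space_eq)
  have os: "orth N v \<in> sets \<pi>" for v using sets by simp
  show ?thesis unfolding is_rec_def
  proof (intro conjI allI impI)
    fix u v :: "nat \<Rightarrow> real" assume "\<forall>n<N. u n = v n"
    then have "orth N u = orth N v" unfolding orth_def by auto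
    then show "measure \<pi> (orth N u) = measure \<pi> (orth N v)" by simp
  next
    fix u :: "nat \<Rightarrow> real" assume "\<forall>n<N. u n = 1"
    then have "orth N u = space \<pi>" unfolding orth_def sp space_ss by auto
    then show "measure \<pi> (orth N u) = 1" by (simp add: prob_space)
  next
    fix u :: "nat \<Rightarrow> real" assume u: "\<forall>n<N. 0 \<le> u n \<and> u n \<le> 1"
    define f where "f \<eta> = p * ((\<Prod>n<N. u n) * indicator (orth N u) \<eta>) +
      (1 - p) * (\<Sum>S\<in>Pow {..<N}. wS N u S * indicator (orth N (restr S u)) \<eta>)" for \<eta>
    have fint: "integrable \<pi> f" unfolding f_def using os
      by (intro Bochner_Integration.integrable_add Bochner_Integration.integrable_mult_right Bochner_Integration.integrable_sum) (auto intro!: integrable_real_indicator simp: less_top[symmetric])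
    have feq: "\<eta> \<in> space \<pi> \<Longrightarrow> trans_prob p \<eta> (orth N u) = ennreal (f \<eta>)" for \<eta>
      unfolding f_def using p u sp by (simp add: trans_orth amax_ind amin_expand)
    have fnn: "\<eta> \<in> space \<pi> \<Longrightarrow> 0 \<le> f \<eta>" for \<eta>
    proof -
      assume "\<eta> \<in> space \<pi>"
      then have "f \<eta> = p * amax N u \<eta> + (1 - p) * amin N u \<eta>"
        unfolding f_def using sp by (simp add: amax_ind amin_expand)
      also have "\<dots> \<ge> 0" using p u unfolding amax_def amin_def by (intro add_nonneg_nonneg mult_nonneg_nonneg prod_nonneg) auto
      finally show ?thesis .
    qed
    have "emeasure \<pi> (orth N u) = (\<integral>\<^sup>+ \<eta>. ennreal (f \<eta>) \<partial>\<pi>)"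
      using inv[OF orth_sets] by (simp add: feq cong: nn_integral_cong)
    also have "\<dots> = ennreal (integral\<^sup>L \<pi> f)"
      using fint fnn by (intro nn_integral_eq_integral) auto
    finally have "measure \<pi> (orth N u) = integral\<^sup>L \<pi> f"
      using fnn by (simp add: emeasure_eq_measure integral_nonneg_AE measure_nonneg)
    also have "\<dots> = p * (\<Prod>n<N. u n) * measure \<pi> (orth N u) +
      (1 - p) * (\<Sum>S\<in>Pow {..<N}. wS N u S * measure \<pi> (orth N (restr S u)))"
    proof -
      have ii: "integrable \<pi> (indicat_real (orth N v))" for v
        using os by (auto intro!: integrable_real_indicator simp: less_top[symmetric])
      have mi: "integral\<^sup>L \<pi> (indicat_real (orth N v)) = measure \<pi> (orth N v)" for v
        using os[of v] by (simp add: Int_absorb2 sets.sets_into_space)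
      have "integral\<^sup>L \<pi> f = p * integral\<^sup>L \<pi> (\<lambda>\<eta>. (\<Prod>n<N. u n) * indicator (orth N u) \<eta>) +
        (1 - p) * integral\<^sup>L \<pi> (\<lambda>\<eta>. \<Sum>S\<in>Pow {..<N}. wS N u S * indicator (orth N (restr S u)) \<eta>)"
      proof -
        have I1: "integrable \<pi> (\<lambda>\<eta>. p * ((\<Prod>n<N. u n) * indicator (orth N u) \<eta>))"
          by (intro Bochner_Integration.integrable_mult_right ii)
        have I2: "integrable \<pi> (\<lambda>\<eta>. (1 - p) * (\<Sum>S\<in>Pow {..<N}. wS N u S * indicator (orth N (restr S u)) \<eta>))"
          by (intro Bochner_Integration.integrable_mult_right Bochner_Integration.integrable_sum ii)
        show ?thesis unfolding f_def Bochner_Integration.integral_add[OF I1 I2] integral_mult_right_zero ..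
      qed
      also have "integral\<^sup>L \<pi> (\<lambda>\<eta>. \<Sum>S\<in>Pow {..<N}. wS N u S * indicator (orth N (restr S u)) \<eta>)
          = (\<Sum>S\<in>Pow {..<N}. wS N u S * measure \<pi> (orth N (restr S u)))"
        by (subst Bochner_Integration.integral_sum) (auto intro!: ii simp: mi Int_absorb2 sets.sets_into_space[OF os])
      also have "integral\<^sup>L \<pi> (\<lambda>\<eta>. (\<Prod>n<N. u n) * indicator (orth N u) \<eta>) = (\<Prod>n<N. u n) * measure \<pi> (orth N u)"
        using mi[of u] by simp
      finally show ?thesis by simp
    qed
    finally show "measure \<pi> (orth N u) = p * (\<Prod>n<N. u n) * measure \<pi> (orth N u) +
      (1 - p) * (\<Sum>S\<in>Pow {..<N}. wS N u S * measure \<pi> (orth N (restr S u)))" .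
  qed
qed

definition OE :: "(nat \<Rightarrow> real) set set" where "OE = {orth N u | N u. True}"

lemma OE_Int_stable: "Int_stable OE"
proof (rule Int_stableI)
  fix a b assume "a \<in> OE" "b \<in> OE"
  then obtain N u M v where ab: "a = orth N u" "b = orth M v" unfolding OE_def by auto
  define w where "w n = min (if n < N then u n else 1) (if n < M then v n else 1)" for n
  have "a \<inter> b = orth (max N M) w" unfolding ab orth_def w_def space_ss by auto
  then show "a \<inter> b \<in> OE" unfolding OE_def by auto
qed

lemma OE_Pow: "OE \<subseteq> Pow (space state_space)"
  unfolding OE_def orth_def by auto

lemma sets_ss_gen: "sets state_space = sigma_sets (space state_space) OE"
proof
  show "sigma_sets (space state_space) OE \<subseteq> sets state_space"
    by (rule sets.sigma_sets_subset) (auto simp: OE_def)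
next
  define M' where "M' = sigma (space state_space) OE"
  have spM: "space M' = space state_space" unfolding M'_def using OE_Pow by simp
  have sM: "sets M' = sigma_sets (space state_space) OE" unfolding M'_def using OE_Pow by simp
  have coord: "(\<lambda>\<eta>. \<eta> i) \<in> measurable M' (restrict_space borel {0..1::real})" for i
  proof (rule measurable_restrict_space2)
    show "(\<lambda>\<eta>. \<eta> i) \<in> space M' \<rightarrow> {0..1}" unfolding spM space_ss by auto
    show "(\<lambda>\<eta>. \<eta> i) \<in> borel_measurable M'"
      unfolding borel_measurable_iff_le
    proof
      fix a :: real
      show "{w \<in> space M'. w i \<le> a} \<in> sets M'"
      proof (cases "a < 0")
        case True
        then have "{w \<in> space M'. w i \<le> a} = {}" unfolding spM space_ss by (auto dest!: spec[where x=i])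
        then show ?thesis by (metis sets.empty_sets)
      next
        case False
        have "{w \<in> space M'. w i \<le> a} = orth (Suc i) (\<lambda>n. if n = i then min a 1 else 1)"
          using False unfolding spM space_ss orth_def by auto
        also have "\<dots> \<in> sets M'" unfolding sM by (rule sigma_sets.Basic) (auto simp: OE_def)
        finally show ?thesis .
      qed
    qed
  qed
  have "(\<lambda>\<eta>. \<eta>) \<in> measurable M' state_space"
    unfolding state_space_def
    by (rule measurable_PiM_single'[where f="\<lambda>i \<eta>. \<eta> i", simplified]) 
       (use coord spM in \<open>auto simp: space_ss space_restrict_space\<close>)
  show "sets state_space \<subseteq> sigma_sets (space state_space) OE"
  proof
    fix A assume A: "A \<in> sets state_space"
    have "(\<lambda>\<eta>. \<eta>) -` A \<inter> space M' \<in> sets M'" by (rule measurable_sets[OF \<open>_ \<in> measurable M' state_space\<close> A])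
    moreover have "(\<lambda>\<eta>. \<eta>) -` A \<inter> space M' = A" using sets.sets_into_space[OF A] spM by auto
    ultimately show "A \<in> sigma_sets (space state_space) OE" using sM by simp
  qed
qed

lemma measure_unique_orth:
  assumes ps1: "prob_space \<pi>1" and ps2: "prob_space \<pi>2"
    and s1: "sets \<pi>1 = sets state_space" and s2: "sets \<pi>2 = sets state_space"
    and eq: "\<And>N u. measure \<pi>1 (orth N u) = measure \<pi>2 (orth N u)"
  shows "\<pi>1 = \<pi>2"
proof -
  interpret P1: prob_space \<pi>1 by fact
  interpret P2: prob_space \<pi>2 by fact
  show ?thesis
proof (rule measure_eqI_generator_eq[OF OE_Int_stable OE_Pow])
  fix X assume "X \<in> OE"
  then obtain N u where X: "X = orth N u" unfolding OE_def by auto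
  show "emeasure \<pi>1 X = emeasure \<pi>2 X" unfolding X
    using eq[of N u] P1.emeasure_eq_measure P2.emeasure_eq_measure by metis
next
  show "sets \<pi>1 = sigma_sets (space state_space) OE" using s1 sets_ss_gen by simp
  show "sets \<pi>2 = sigma_sets (space state_space) OE" using s2 sets_ss_gen by simp
  show "range (\<lambda>i. orth 0 (\<lambda>_. 1)) \<subseteq> OE" unfolding OE_def by auto
  show "(\<Union>i. orth 0 (\<lambda>_. 1)) = space state_space" unfolding orth_def by auto
  show "\<And>i. emeasure \<pi>1 (orth 0 (\<lambda>_. 1)) \<noteq> \<infinity>" using P1.emeasure_eq_measure by simp
qed
qed

definition tterm :: "(nat \<Rightarrow> nat) \<Rightarrow> real \<Rightarrow> nat \<Rightarrow> real" where
  "tterm G u k = u ^ T_seq G k * ((1 - u) / u) ^ k"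

lemma T_seq_ge: "\<forall>i. 1 \<le> G i \<Longrightarrow> Suc k \<le> T_seq G k"
proof (induction k)
  case 0 then show ?case by (simp add: T_seq_def)
next
  case (Suc k)
  then have "T_seq G (Suc k) = T_seq G k + G (Suc k)" by (simp add: T_seq_def)
  moreover have "Suc k \<le> T_seq G k" by (rule Suc.IH[OF Suc.prems])
  moreover have "1 \<le> G (Suc k)" using Suc.prems by auto
  ultimately show ?case by linarith
qed

lemma tterm_bounds:
  assumes G: "\<forall>i. 1 \<le> G i" and u: "0 < u" "u < 1"
  shows "0 \<le> tterm G u k" "tterm G u k \<le> u * (1 - u) ^ k"
proof -
  show "0 \<le> tterm G u k" unfolding tterm_def using u by simp
  have "u ^ T_seq G k \<le> u ^ Suc k" using T_seq_ge[OF G] u by (intro power_decreasing) auto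
  then have "tterm G u k \<le> u ^ Suc k * ((1 - u) / u) ^ k" unfolding tterm_def using u
    by (intro mult_right_mono) auto
  also have "\<dots> = u * (1 - u) ^ k" using u by (simp add: power_divide field_simps)
  finally show "tterm G u k \<le> u * (1 - u) ^ k" .
qed

lemma geo_sum: "0 < u \<Longrightarrow> u < 1 \<Longrightarrow> (\<lambda>k. u * (1 - u) ^ k) sums (1::real)"
proof -
  assume u: "0 < u" "u < 1"
  have "(\<lambda>k. (1 - u) ^ k) sums (1 / (1 - (1 - u)))" using u by (intro geometric_sums) auto
  then have "(\<lambda>k. u * (1 - u) ^ k) sums (u * (1 / (1 - (1 - u))))" by (rule sums_mult)
  then show ?thesis using u by simp
qed

lemma tterm_summable:
  assumes G: "\<forall>i. 1 \<le> G i" and u: "0 < u" "u < 1"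
  shows "summable (tterm G u)"
proof (rule summable_comparison_test'[where g="\<lambda>k. u * (1 - u) ^ k" and N=0])
  show "summable (\<lambda>k. u * (1 - u) ^ k)" using geo_sum[OF u] by (rule sums_summable)
  show "norm (tterm G u n) \<le> u * (1 - u) ^ n" if "0 \<le> n" for n
    using tterm_bounds[OF G u, of n] by simp
qed

lemma Theta_mid: "0 < u \<Longrightarrow> u < 1 \<Longrightarrow> Theta_inf G u = suminf (tterm G u)"
  unfolding Theta_inf_def tterm_def by simp

lemma Theta_bounds:
  assumes G: "\<forall>i. 1 \<le> G i" and u: "0 \<le> u" "u \<le> 1"
  shows "0 \<le> Theta_inf G u \<and> Theta_inf G u \<le> 1"
proof (cases "0 < u \<and> u < 1")
  case True
  then have u': "0 < u" "u < 1" by auto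
  have "0 \<le> suminf (tterm G u)" using tterm_bounds[OF G u'] tterm_summable[OF G u']
    by (intro suminf_nonneg) auto
  moreover have "suminf (tterm G u) \<le> (\<Sum>k. u * (1 - u) ^ k)"
    using tterm_bounds[OF G u'] tterm_summable[OF G u'] geo_sum[OF u']
    using sums_summable[OF geo_sum[OF u']] by (intro suminf_le) auto
  moreover have "(\<Sum>k. u * (1 - u) ^ k) = 1" using geo_sum[OF u'] by (rule sums_unique[symmetric])
  ultimately show ?thesis unfolding Theta_mid[OF u'] by simp
next
  case False
  then have "u = 0 \<or> u = 1" using u by auto
  then show ?thesis by (elim disjE) (simp_all add: Theta_inf_def)
qed

lemma T_seq_case1: "T_seq (case_nat 1 G) 0 = 1" "T_seq (case_nat 1 G) (Suc k) = Suc (T_seq G k)"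
  by (simp_all only: T_seq_def sum.atMost_Suc_shift) simp_all

lemma T_seq_upd: "T_seq (G(0 := Suc (G 0))) k = Suc (T_seq G k)"
  unfolding T_seq_def by (induction k) auto

lemma Theta_case1:
  assumes G: "\<forall>i. 1 \<le> G i" and u: "0 \<le> u" "u \<le> 1"
  shows "Theta_inf (case_nat 1 G) u = u + (1 - u) * Theta_inf G u"
proof (cases "0 < u \<and> u < 1")
  case True
  then have u': "0 < u" "u < 1" by auto
  have G': "\<forall>i. 1 \<le> case_nat 1 G i" using G by (auto split: nat.split)
  have s: "summable (tterm (case_nat 1 G) u)" by (rule tterm_summable[OF G' u'])
  have "suminf (tterm (case_nat 1 G) u) = tterm (case_nat 1 G) u 0 + (\<Sum>k. tterm (case_nat 1 G) u (Suc k))"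
    using suminf_split_head[OF s] by simp
  also have "(\<lambda>k. tterm (case_nat 1 G) u (Suc k)) = (\<lambda>k. (1 - u) * tterm G u k)"
    unfolding tterm_def T_seq_case1 using u' by (auto simp: field_simps)
  also have "(\<Sum>k. (1 - u) * tterm G u k) = (1 - u) * suminf (tterm G u)"
    by (rule suminf_mult[OF tterm_summable[OF G u']])
  also have "tterm (case_nat 1 G) u 0 = u" unfolding tterm_def T_seq_case1 by simp
  finally have X: "suminf (tterm (case_nat 1 G) u) = u + (1 - u) * suminf (tterm G u)" .
  show ?thesis unfolding Theta_mid[OF u'] by (rule X)
next
  case False
  then have "u = 0 \<or> u = 1" using u by auto
  then show ?thesis by (elim disjE) (simp_all add: Theta_inf_def)
qed

lemma Theta_upd:
  assumes G: "\<forall>i. 1 \<le> G i" and u: "0 \<le> u" "u \<le> 1"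
  shows "Theta_inf (G(0 := Suc (G 0))) u = u * Theta_inf G u"
proof (cases "0 < u \<and> u < 1")
  case True
  then have u': "0 < u" "u < 1" by auto
  have "tterm (G(0 := Suc (G 0))) u = (\<lambda>k. u * tterm G u k)"
    by (auto simp: tterm_def T_seq_upd)
  then show ?thesis using Theta_mid[OF u'] suminf_mult[OF tterm_summable[OF G u']] by simp
next
  case False
  then have "u = 0 \<or> u = 1" using u by auto
  then show ?thesis by (elim disjE) (simp_all add: Theta_inf_def)
qed

context sequence_space
begin

lemma pair_sf: "pair_sigma_finite M S"
  by (simp add: pair_sigma_finite_def prob_space_imp_sigma_finite M.prob_space_axioms P.prob_space_axioms)

lemma L_nn:
  assumes g[measurable]: "g \<in> borel_measurable S"
  shows "(\<integral>\<^sup>+\<omega>. g \<omega> \<partial>S) = (\<integral>\<^sup>+\<omega>. \<integral>\<^sup>+s. g (case_nat s \<omega>) \<partial>M \<partial>S)"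
proof -
  interpret pair_sigma_finite M S by (rule pair_sf)
  have "(\<integral>\<^sup>+\<omega>. g \<omega> \<partial>S) = (\<integral>\<^sup>+\<omega>. g \<omega> \<partial>distr (M \<Otimes>\<^sub>M S) S (\<lambda>(s, \<omega>). case_nat s \<omega>))"
    by (simp add: PiM_iter)
  also have "\<dots> = (\<integral>\<^sup>+x. g (case_prod case_nat x) \<partial>(M \<Otimes>\<^sub>M S))"
    by (intro nn_integral_distr) auto
  also have "\<dots> = (\<integral>\<^sup>+\<omega>. \<integral>\<^sup>+s. g (case_nat s \<omega>) \<partial>M \<partial>S)"
    by (subst nn_integral_snd[symmetric]) (auto simp: case_prod_beta')
  finally show ?thesis .
qed

end

lemma G_pmf_decomp:
  assumes p: "0 \<le> p" "p < 1"
  shows "G_pmf p = bind_pmf (bernoulli_pmf p) (\<lambda>b. if b then map_pmf Suc (G_pmf p) else return_pmf 1)"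
proof (rule pmf_eqI)
  fix n
  have pG0: "pmf (G_pmf p) 0 = 0"
  proof -
    have "0 \<notin> set_pmf (G_pmf p)" unfolding G_pmf_def by auto
    then show ?thesis by (simp add: set_pmf_eq)
  qed
  have pGS: "pmf (G_pmf p) (Suc m) = p ^ m * (1 - p)" for m
    unfolding G_pmf_def using p by (simp add: pmf_map_inj')
  have pS0: "pmf (map_pmf Suc (G_pmf p)) 0 = 0"
  proof -
    have "0 \<notin> set_pmf (map_pmf Suc (G_pmf p))" by auto
    then show ?thesis by (simp add: set_pmf_eq)
  qed
  have pSS: "pmf (map_pmf Suc (G_pmf p)) (Suc m) = pmf (G_pmf p) m" for m
    by (simp add: pmf_map_inj')
  show "pmf (G_pmf p) n = pmf (bind_pmf (bernoulli_pmf p) (\<lambda>b. if b then map_pmf Suc (G_pmf p) else return_pmf 1)) n"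
  proof (cases n)
    case 0 then show ?thesis using p by (simp add: pG0 pS0 indicator_def pmf_bind)
  next
    case (Suc m)
    then show ?thesis using p
      by (cases m) (simp_all add: pG0 pGS pSS indicator_def pmf_bind)
  qed
qed

lemma nn_G_pmf:
  assumes p: "0 \<le> p" "p < 1"
  shows "(\<integral>\<^sup>+s. h s \<partial>measure_pmf (G_pmf p)) = ennreal p * (\<integral>\<^sup>+s. h (Suc s) \<partial>measure_pmf (G_pmf p)) + ennreal (1 - p) * h 1"
proof -
  have "(\<integral>\<^sup>+s. h s \<partial>measure_pmf (G_pmf p)) =
     (\<integral>\<^sup>+s. h s \<partial>measure_pmf (bind_pmf (bernoulli_pmf p) (\<lambda>b. if b then map_pmf Suc (G_pmf p) else return_pmf 1)))"
    by (subst G_pmf_decomp[OF p]) (rule refl)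
  also have "\<dots> = (\<integral>\<^sup>+b. (\<integral>\<^sup>+s. h s \<partial>measure_pmf (if b then map_pmf Suc (G_pmf p) else return_pmf 1)) \<partial>measure_pmf (bernoulli_pmf p))"
    by (rule nn_integral_bind_pmf)
  also have "\<dots> = (\<integral>\<^sup>+s. h s \<partial>measure_pmf (map_pmf Suc (G_pmf p))) * ennreal p + (\<integral>\<^sup>+s. h s \<partial>measure_pmf (return_pmf 1)) * ennreal (1 - p)"
    by (subst nn_integral_bernoulli_pmf) (use p in auto)
  also have "(\<integral>\<^sup>+s. h s \<partial>measure_pmf (map_pmf Suc (G_pmf p))) = (\<integral>\<^sup>+s. h (Suc s) \<partial>measure_pmf (G_pmf p))"
    by (rule nn_integral_map_pmf)
  also have "(\<integral>\<^sup>+s. h s \<partial>measure_pmf (return_pmf 1)) = h 1"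
    by (rule nn_integral_return_pmf) simp
  finally show ?thesis by (simp add: mult.commute)
qed

lemma G_seq: "0 \<le> p \<Longrightarrow> p \<le> 1 \<Longrightarrow> sequence_space (measure_pmf (G_pmf p))"
  by (simp add: sequence_space_def product_prob_space_def product_sigma_finite_def
    prob_space_imp_sigma_finite measure_pmf.prob_space_axioms product_prob_space_axioms_def)

lemma G_step:
  assumes p: "0 \<le> p" "p < 1" and g[measurable]: "g \<in> borel_measurable (G_space p)"
  shows "(\<integral>\<^sup>+\<omega>. g \<omega> \<partial>G_space p) =
    ennreal p * (\<integral>\<^sup>+\<omega>. g (case_nat (Suc (\<omega> 0)) (\<lambda>j. \<omega> (Suc j))) \<partial>G_space p) +
    ennreal (1 - p) * (\<integral>\<^sup>+\<omega>. g (case_nat 1 \<omega>) \<partial>G_space p)"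
proof -
  interpret sequence_space "measure_pmf (G_pmf p)" using p by (intro G_seq) auto
  have S: "G_space p = S" unfolding G_space_def ..
  have g'[measurable]: "g \<in> borel_measurable S" using g unfolding S .
  have m1[measurable]: "(\<lambda>\<omega>. Suc (\<omega> 0)) \<in> measurable S (measure_pmf (G_pmf p))"
    by simp
  have m2[measurable]: "(\<lambda>\<omega> j. \<omega> (Suc j)) \<in> measurable S S"
    by (rule measurable_PiM_single') (auto simp: space_PiM)
  have "(\<integral>\<^sup>+\<omega>. g \<omega> \<partial>S) = (\<integral>\<^sup>+\<omega>. \<integral>\<^sup>+s. g (case_nat s \<omega>) \<partial>measure_pmf (G_pmf p) \<partial>S)"
    by (rule L_nn) simp
  also have "\<dots> = (\<integral>\<^sup>+\<omega>. ennreal p * (\<integral>\<^sup>+s. g (case_nat (Suc s) \<omega>) \<partial>measure_pmf (G_pmf p)) + ennreal (1 - p) * g (case_nat 1 \<omega>) \<partial>S)"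
    by (rule nn_integral_cong) (rule nn_G_pmf[OF p])
  also have "\<dots> = ennreal p * (\<integral>\<^sup>+\<omega>. \<integral>\<^sup>+s. g (case_nat (Suc s) \<omega>) \<partial>measure_pmf (G_pmf p) \<partial>S) + ennreal (1 - p) * (\<integral>\<^sup>+\<omega>. g (case_nat 1 \<omega>) \<partial>S)"
  proof -
    have c1: "(\<lambda>x. Suc (snd x)) \<in> measurable (S \<Otimes>\<^sub>M measure_pmf (G_pmf p)) (measure_pmf (G_pmf p))"
      by (rule measurable_compose[OF measurable_snd]) simp
    have c2: "(\<lambda>x. fst x) \<in> measurable (S \<Otimes>\<^sub>M measure_pmf (G_pmf p)) S"
      by (rule measurable_fst)
    have "(\<lambda>x. g (case_nat (Suc (snd x)) (fst x))) \<in> borel_measurable (S \<Otimes>\<^sub>M measure_pmf (G_pmf p))"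
    proof -
      have cm: "(\<lambda>x. case_nat (Suc (snd x)) (fst x)) \<in> measurable (S \<Otimes>\<^sub>M measure_pmf (G_pmf p)) S"
        using c1 c2 by (rule measurable_case_nat')
      show ?thesis using measurable_compose[OF cm g'] .
    qed
    then have "(\<lambda>(\<omega>, s). g (case_nat (Suc s) \<omega>)) \<in> borel_measurable (S \<Otimes>\<^sub>M measure_pmf (G_pmf p))"
      unfolding case_prod_beta' .
    then have mi: "(\<lambda>\<omega>. \<integral>\<^sup>+s. g (case_nat (Suc s) \<omega>) \<partial>measure_pmf (G_pmf p)) \<in> borel_measurable S"
      by (rule sigma_finite_measure.borel_measurable_nn_integral[OF prob_space_imp_sigma_finite[OF measure_pmf.prob_space_axioms]])
    have m1: "(\<lambda>\<omega>. g (case_nat 1 \<omega>)) \<in> borel_measurable S"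
    proof -
      have k1: "(\<lambda>\<omega>. 1::nat) \<in> measurable S (measure_pmf (G_pmf p))" by (rule measurable_const) simp
      have k2: "(\<lambda>\<omega>. \<omega>) \<in> measurable S S" by (rule measurable_ident_sets) (rule refl)
      have cm: "(\<lambda>\<omega>. case_nat 1 \<omega>) \<in> measurable S S"
        using measurable_case_nat'[OF k1 k2] .
      show ?thesis using measurable_compose[OF cm g'] .
    qed
    have m2: "(\<lambda>\<omega>. ennreal (1 - p) * g (case_nat 1 \<omega>)) \<in> borel_measurable S"
      by (rule borel_measurable_times_ennreal[OF borel_measurable_const m1])
    show ?thesis
      unfolding nn_integral_linear[OF mi m2] nn_integral_cmult[OF m1] ..
  qed
  also have "(\<integral>\<^sup>+\<omega>. \<integral>\<^sup>+s. g (case_nat (Suc s) \<omega>) \<partial>measure_pmf (G_pmf p) \<partial>S) =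
      (\<integral>\<^sup>+\<omega>. \<integral>\<^sup>+s. g (case_nat (Suc (case_nat s \<omega> 0)) (\<lambda>j. case_nat s \<omega> (Suc j))) \<partial>measure_pmf (G_pmf p) \<partial>S)"
    by simp
  also have "\<dots> = (\<integral>\<^sup>+\<omega>. g (case_nat (Suc (\<omega> 0)) (\<lambda>j. \<omega> (Suc j))) \<partial>S)"
    by (rule L_nn[symmetric]) simp
  finally show ?thesis unfolding S .
qed

lemma G_ps: "prob_space (G_space p)"
  unfolding G_space_def by (rule prob_space_PiM) (rule measure_pmf.prob_space_axioms)

lemma meas_case1: "(\<lambda>\<omega>. case_nat 1 \<omega>) \<in> measurable (G_space p) (G_space p)"
proof -
  have k1: "(\<lambda>\<omega>. 1::nat) \<in> measurable (PiM UNIV (\<lambda>k. measure_pmf (G_pmf p))) (measure_pmf (G_pmf p))"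
    by (rule measurable_const) simp
  have k2: "(\<lambda>\<omega>. \<omega>) \<in> measurable (PiM UNIV (\<lambda>k. measure_pmf (G_pmf p))) (PiM UNIV (\<lambda>k. measure_pmf (G_pmf p)))"
    by (rule measurable_ident_sets) (rule refl)
  show ?thesis using measurable_case_nat'[OF k1 k2] unfolding G_space_def .
qed

lemma meas_shift: "(\<lambda>\<omega>. case_nat (Suc (\<omega> 0)) (\<lambda>j. \<omega> (Suc j))) \<in> measurable (G_space p) (G_space p)"
proof -
  have k1: "(\<lambda>\<omega>. Suc (\<omega> 0)) \<in> measurable (PiM UNIV (\<lambda>k. measure_pmf (G_pmf p))) (measure_pmf (G_pmf p))"
    by (rule measurable_compose[OF measurable_component_singleton]) auto
  have k2: "(\<lambda>\<omega> j. \<omega> (Suc j)) \<in> measurable (PiM UNIV (\<lambda>k. measure_pmf (G_pmf p))) (PiM UNIV (\<lambda>k. measure_pmf (G_pmf p)))"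
    by (rule measurable_PiM_single') (auto simp: space_PiM)
  show ?thesis using measurable_case_nat'[OF k1 k2] unfolding G_space_def .
qed

lemma G_step_real:
  assumes p: "0 \<le> p" "p < 1" and g: "g \<in> borel_measurable (G_space p)"
    and gb: "\<And>G. 0 \<le> g G \<and> g G \<le> 1"
  shows "integral\<^sup>L (G_space p) g =
    p * integral\<^sup>L (G_space p) (\<lambda>\<omega>. g (case_nat (Suc (\<omega> 0)) (\<lambda>j. \<omega> (Suc j)))) +
    (1 - p) * integral\<^sup>L (G_space p) (\<lambda>\<omega>. g (case_nat 1 \<omega>))"
proof -
  interpret prob_space "G_space p" by (rule G_ps)
  have g1: "(\<lambda>\<omega>. g (case_nat (Suc (\<omega> 0)) (\<lambda>j. \<omega> (Suc j)))) \<in> borel_measurable (G_space p)"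
    by (rule measurable_compose[OF meas_shift g])
  have g2: "(\<lambda>\<omega>. g (case_nat 1 \<omega>)) \<in> borel_measurable (G_space p)"
    by (rule measurable_compose[OF meas_case1 g])
  have int: "integrable (G_space p) f" if "f \<in> borel_measurable (G_space p)" "\<And>x. 0 \<le> f x \<and> f x \<le> 1" for f :: "(nat \<Rightarrow> nat) \<Rightarrow> real"
    using that by (intro integrable_const_bound[where B=1]) auto
  have nn: "(\<integral>\<^sup>+x. ennreal (f x) \<partial>G_space p) = ennreal (integral\<^sup>L (G_space p) f)"
    if "f \<in> borel_measurable (G_space p)" "\<And>x. 0 \<le> f x \<and> f x \<le> 1" for f :: "(nat \<Rightarrow> nat) \<Rightarrow> real"
    by (rule nn_integral_eq_integral[OF int[OF that]]) (use that in auto)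
  have ge: "(\<lambda>x. ennreal (g x)) \<in> borel_measurable (G_space p)" using g by (rule measurable_compose) simp
  have "ennreal (integral\<^sup>L (G_space p) g) = (\<integral>\<^sup>+x. ennreal (g x) \<partial>G_space p)"
    by (rule nn[OF g gb, symmetric])
  also have "\<dots> = ennreal p * (\<integral>\<^sup>+\<omega>. ennreal (g (case_nat (Suc (\<omega> 0)) (\<lambda>j. \<omega> (Suc j)))) \<partial>G_space p) +
    ennreal (1 - p) * (\<integral>\<^sup>+\<omega>. ennreal (g (case_nat 1 \<omega>)) \<partial>G_space p)"
    by (rule G_step[OF p ge])
  also have "\<dots> = ennreal p * ennreal (integral\<^sup>L (G_space p) (\<lambda>\<omega>. g (case_nat (Suc (\<omega> 0)) (\<lambda>j. \<omega> (Suc j))))) +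
    ennreal (1 - p) * ennreal (integral\<^sup>L (G_space p) (\<lambda>\<omega>. g (case_nat 1 \<omega>)))"
    using nn[OF g1] nn[OF g2] gb by simp
  also have "\<dots> = ennreal (p * integral\<^sup>L (G_space p) (\<lambda>\<omega>. g (case_nat (Suc (\<omega> 0)) (\<lambda>j. \<omega> (Suc j)))) +
    (1 - p) * integral\<^sup>L (G_space p) (\<lambda>\<omega>. g (case_nat 1 \<omega>)))"
  proof -
    have e1: "0 \<le> integral\<^sup>L (G_space p) (\<lambda>\<omega>. g (case_nat (Suc (\<omega> 0)) (\<lambda>j. \<omega> (Suc j))))"
      using gb by (intro Bochner_Integration.integral_nonneg) auto
    have e2: "0 \<le> integral\<^sup>L (G_space p) (\<lambda>\<omega>. g (case_nat 1 \<omega>))"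
      using gb by (intro Bochner_Integration.integral_nonneg) auto
    show ?thesis using p e1 e2
      by (subst ennreal_plus) (auto simp: ennreal_mult)
  qed
  finally show ?thesis using p gb
    by (subst (asm) ennreal_inj) (auto intro!: add_nonneg_nonneg mult_nonneg_nonneg integral_nonneg_AE)
qed

lemma Theta_meas: "(\<lambda>G. Theta_inf G u) \<in> borel_measurable (G_space p)"
proof (cases "u = 0 \<or> u = 1")
  case True
  then show ?thesis by (auto simp: Theta_inf_def)
next
  case False
  then have eq: "(\<lambda>G. Theta_inf G u) = (\<lambda>G. \<Sum>k. (\<Prod>i\<le>k. u ^ G i) * ((1 - u) / u) ^ k)"
    by (auto simp: Theta_inf_def T_seq_def power_sum)
  have c: "(\<lambda>G. u ^ G i) \<in> borel_measurable (G_space p)" for i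
    unfolding G_space_def by (rule measurable_compose[OF measurable_component_singleton]) auto
  show ?thesis unfolding eq
    by (intro borel_measurable_suminf borel_measurable_times borel_measurable_prod c borel_measurable_const)
qed

lemma AE_G1: "AE G in G_space p. \<forall>i. 1 \<le> G i"
proof -
  have "AE x in measure_pmf (G_pmf p). 1 \<le> x" by (auto simp: AE_measure_pmf_iff G_pmf_def)
  then have "\<And>i. AE G in G_space p. 1 \<le> G i"
    unfolding G_space_def by (intro AE_PiM_component) (auto intro: measure_pmf.prob_space_axioms)
  then show ?thesis by (simp add: AE_all_countable)
qed

definition Thc :: "(nat \<Rightarrow> nat) \<Rightarrow> real \<Rightarrow> real" where
  "Thc G u = max 0 (min 1 (Theta_inf G u))"

definition Phi :: "nat \<Rightarrow> (nat \<Rightarrow> real) \<Rightarrow> (nat \<Rightarrow> nat) \<Rightarrow> real" where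
  "Phi N u G = (\<Prod>n<N. Thc G (u n))"

definition Fstar :: "real \<Rightarrow> nat \<Rightarrow> (nat \<Rightarrow> real) \<Rightarrow> real" where
  "Fstar p N u = (\<integral>G. (\<Prod>n<N. Theta_inf G (u n)) \<partial>G_space p)"

lemma Thc_meas: "(\<lambda>G. Thc G u) \<in> borel_measurable (G_space p)"
  unfolding Thc_def by (intro borel_measurable_max borel_measurable_min borel_measurable_const Theta_meas)

lemma Phi_meas: "Phi N u \<in> borel_measurable (G_space p)"
proof -
  have "(\<lambda>G. \<Prod>n<N. Thc G (u n)) \<in> borel_measurable (G_space p)"
    by (intro borel_measurable_prod Thc_meas)
  then show ?thesis unfolding Phi_def[abs_def] .
qed

lemma Thc_bnd: "0 \<le> Thc G u \<and> Thc G u \<le> 1"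
  unfolding Thc_def by auto

lemma Phi_bnd: "0 \<le> Phi N u G \<and> Phi N u G \<le> 1"
  unfolding Phi_def using Thc_bnd by (auto intro!: prod_nonneg prod_le_1)

lemma Thc_eq: "\<forall>i. 1 \<le> G i \<Longrightarrow> 0 \<le> u \<Longrightarrow> u \<le> 1 \<Longrightarrow> Thc G u = Theta_inf G u"
  using Theta_bounds[of G u] unfolding Thc_def by auto

lemma Thc_1: "Thc G 1 = 1"
  unfolding Thc_def Theta_inf_def by simp

lemma shift_eq: "case_nat (Suc (G 0)) (\<lambda>j. G (Suc j)) = G(0 := Suc (G 0))"
  by (rule ext) (simp split: nat.split)

lemma Phi_shift:
  assumes G: "\<forall>i. 1 \<le> G i" and u: "\<forall>n<N. 0 \<le> u n \<and> u n \<le> 1"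
  shows "Phi N u (case_nat (Suc (G 0)) (\<lambda>j. G (Suc j))) = (\<Prod>n<N. u n) * Phi N u G"
proof -
  have G': "\<forall>i. 1 \<le> (G(0 := Suc (G 0))) i" using G by auto
  have "Thc (G(0 := Suc (G 0))) (u n) = u n * Thc G (u n)" if "n < N" for n
  proof -
    have b: "0 \<le> u n" "u n \<le> 1" using u that by auto
    show ?thesis by (simp only: Thc_eq[OF G' b] Thc_eq[OF G b] Theta_upd[OF G b])
  qed
  then show ?thesis unfolding Phi_def shift_eq by (simp add: prod.distrib)
qed

lemma Phi_restr:
  assumes S: "S \<subseteq> {..<N}"
  shows "Phi N (restr S u) G = (\<Prod>n\<in>S. Thc G (u n))"
proof -
  have "Phi N (restr S u) G = (\<Prod>n\<in>{..<N}. if n \<in> S then Thc G (u n) else 1)"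
    unfolding Phi_def restr_def by (intro prod.cong) (auto simp: Thc_1)
  also have "\<dots> = (\<Prod>n\<in>{..<N} \<inter> S. Thc G (u n))" by (rule prod.inter_restrict[symmetric]) simp
  also have "{..<N} \<inter> S = S" using S by auto
  finally show ?thesis .
qed

lemma Phi_case1:
  assumes G: "\<forall>i. 1 \<le> G i" and u: "\<forall>n<N. 0 \<le> u n \<and> u n \<le> 1"
  shows "Phi N u (case_nat 1 G) = (\<Sum>S\<in>Pow {..<N}. wS N u S * Phi N (restr S u) G)"
proof -
  have G': "\<forall>i. 1 \<le> case_nat 1 G i" using G by (auto split: nat.split)
  have "Thc (case_nat 1 G) (u n) = (1 - u n) * Thc G (u n) + u n" if "n < N" for n
  proof -
    have b: "0 \<le> u n" "u n \<le> 1" using u that by auto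
    show ?thesis by (simp only: Thc_eq[OF G' b] Thc_eq[OF G b] Theta_case1[OF G b])
  qed
  then have "Phi N u (case_nat 1 G) = (\<Prod>n<N. (1 - u n) * Thc G (u n) + u n)"
    unfolding Phi_def by (intro prod.cong) auto
  also have "\<dots> = (\<Sum>S\<in>Pow {..<N}. (\<Prod>n\<in>S. (1 - u n) * Thc G (u n)) * (\<Prod>n\<in>{..<N}-S. u n))"
    by (rule prod_add) simp
  also have "\<dots> = (\<Sum>S\<in>Pow {..<N}. wS N u S * Phi N (restr S u) G)"
    by (intro sum.cong refl) (auto simp: wS_def Phi_restr prod.distrib)
  finally show ?thesis .
qed

lemma Fstar_Phi:
  assumes u: "\<forall>n<N. 0 \<le> u n \<and> u n \<le> 1"
  shows "Fstar p N u = integral\<^sup>L (G_space p) (Phi N u)"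
  unfolding Fstar_def
proof (rule integral_cong_AE)
  show "(\<lambda>G. \<Prod>n<N. Theta_inf G (u n)) \<in> borel_measurable (G_space p)"
    by (intro borel_measurable_prod Theta_meas)
  show "Phi N u \<in> borel_measurable (G_space p)" by (rule Phi_meas)
  show "AE G in G_space p. (\<Prod>n<N. Theta_inf G (u n)) = Phi N u G"
    using AE_G1
  proof eventually_elim
    case (elim G)
    then show ?case unfolding Phi_def using u Thc_eq[OF elim] by (intro prod.cong) auto
  qed
qed

lemma Fstar_rec:
  assumes p: "0 < p" "p < 1"
  shows "is_rec p N (Fstar p N)"
  unfolding is_rec_def
proof (intro conjI allI impI)
  interpret prob_space "G_space p" by (rule G_ps)
  fix u v :: "nat \<Rightarrow> real" assume "\<forall>n<N. u n = v n"
  then show "Fstar p N u = Fstar p N v" unfolding Fstar_def by (intro Bochner_Integration.integral_cong) auto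
next
  interpret prob_space "G_space p" by (rule G_ps)
  fix u :: "nat \<Rightarrow> real" assume "\<forall>n<N. u n = 1"
  then have "(\<lambda>G. \<Prod>n<N. Theta_inf G (u n)) = (\<lambda>G. 1)" by (auto simp: Theta_inf_def)
  then show "Fstar p N u = 1" unfolding Fstar_def by (simp add: prob_space)
next
  interpret prob_space "G_space p" by (rule G_ps)
  fix u :: "nat \<Rightarrow> real" assume u: "\<forall>n<N. 0 \<le> u n \<and> u n \<le> 1"
  have ur: "\<forall>n<N. 0 \<le> restr S u n \<and> restr S u n \<le> 1" for S
    using u unfolding restr_def by auto
  have intP: "integrable (G_space p) (Phi N v)" for v
    using Phi_bnd[of N v] by (intro integrable_const_bound[where B=1] Phi_meas) auto
  have E0: "Fstar p N u = integral\<^sup>L (G_space p) (Phi N u)" by (rule Fstar_Phi[OF u])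
  have E1: "integral\<^sup>L (G_space p) (Phi N u) = p * integral\<^sup>L (G_space p) (\<lambda>\<omega>. Phi N u (case_nat (Suc (\<omega> 0)) (\<lambda>j. \<omega> (Suc j)))) +
    (1 - p) * integral\<^sup>L (G_space p) (\<lambda>\<omega>. Phi N u (case_nat 1 \<omega>))"
    using p by (intro G_step_real Phi_meas Phi_bnd) auto
  have E2: "integral\<^sup>L (G_space p) (\<lambda>\<omega>. Phi N u (case_nat (Suc (\<omega> 0)) (\<lambda>j. \<omega> (Suc j)))) =
      integral\<^sup>L (G_space p) (\<lambda>\<omega>. (\<Prod>n<N. u n) * Phi N u \<omega>)"
  proof (rule integral_cong_AE)
    show "(\<lambda>\<omega>. Phi N u (case_nat (Suc (\<omega> 0)) (\<lambda>j. \<omega> (Suc j)))) \<in> borel_measurable (G_space p)"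
      by (rule measurable_compose[OF meas_shift Phi_meas])
    show "(\<lambda>\<omega>. (\<Prod>n<N. u n) * Phi N u \<omega>) \<in> borel_measurable (G_space p)"
      by (intro borel_measurable_times borel_measurable_const Phi_meas)
    show "AE \<omega> in G_space p. Phi N u (case_nat (Suc (\<omega> 0)) (\<lambda>j. \<omega> (Suc j))) = (\<Prod>n<N. u n) * Phi N u \<omega>"
      using AE_G1 by eventually_elim (rule Phi_shift[OF _ u])
  qed
  have E3: "integral\<^sup>L (G_space p) (\<lambda>\<omega>. (\<Prod>n<N. u n) * Phi N u \<omega>) = (\<Prod>n<N. u n) * integral\<^sup>L (G_space p) (Phi N u)"
    by (rule integral_mult_right_zero)
  have E4: "integral\<^sup>L (G_space p) (\<lambda>\<omega>. Phi N u (case_nat 1 \<omega>)) =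
      integral\<^sup>L (G_space p) (\<lambda>\<omega>. \<Sum>S\<in>Pow {..<N}. wS N u S * Phi N (restr S u) \<omega>)"
  proof (rule integral_cong_AE)
    show "(\<lambda>\<omega>. Phi N u (case_nat 1 \<omega>)) \<in> borel_measurable (G_space p)"
      by (rule measurable_compose[OF meas_case1 Phi_meas])
    show "(\<lambda>\<omega>. \<Sum>S\<in>Pow {..<N}. wS N u S * Phi N (restr S u) \<omega>) \<in> borel_measurable (G_space p)"
      by (intro borel_measurable_sum borel_measurable_times borel_measurable_const Phi_meas)
    show "AE \<omega> in G_space p. Phi N u (case_nat 1 \<omega>) = (\<Sum>S\<in>Pow {..<N}. wS N u S * Phi N (restr S u) \<omega>)"
      using AE_G1 by eventually_elim (rule Phi_case1[OF _ u])
  qed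
  have E5: "integral\<^sup>L (G_space p) (\<lambda>\<omega>. \<Sum>S\<in>Pow {..<N}. wS N u S * Phi N (restr S u) \<omega>) =
     (\<Sum>S\<in>Pow {..<N}. wS N u S * integral\<^sup>L (G_space p) (Phi N (restr S u)))"
    by (subst Bochner_Integration.integral_sum) (auto intro!: Bochner_Integration.integrable_mult_right intP)
  have E6: "(\<Sum>S\<in>Pow {..<N}. wS N u S * integral\<^sup>L (G_space p) (Phi N (restr S u))) =
      (\<Sum>S\<in>Pow {..<N}. wS N u S * Fstar p N (restr S u))"
    by (intro sum.cong refl) (simp only: Fstar_Phi[OF ur])
  show "Fstar p N u = p * (\<Prod>n<N. u n) * Fstar p N u +
      (1 - p) * (\<Sum>S\<in>Pow {..<N}. wS N u S * Fstar p N (restr S u))"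
  proof -
    have X: "integral\<^sup>L (G_space p) (Phi N u) = p * ((\<Prod>n<N. u n) * integral\<^sup>L (G_space p) (Phi N u)) +
      (1 - p) * (\<Sum>S\<in>Pow {..<N}. wS N u S * Fstar p N (restr S u))"
      using E1 unfolding E2 E3 E4 E5 E6 .
    show ?thesis unfolding E0 by (rule trans[OF X]) (simp only: mult.assoc)
  qed
qed

definition clampr :: "real \<Rightarrow> real" where "clampr x = max 0 (min 1 x)"

definition stepc :: "bool \<times> (nat \<Rightarrow> real) \<Rightarrow> (nat \<Rightarrow> real) \<Rightarrow> nat \<Rightarrow> real" where
  "stepc s \<eta> = (\<lambda>n. if fst s then max (\<eta> n) (clampr (snd s n)) else min (\<eta> n) (clampr (snd s n)))"

fun compn :: "nat \<Rightarrow> (nat \<Rightarrow> bool \<times> (nat \<Rightarrow> real)) \<Rightarrow> nat \<Rightarrow> real" where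
  "compn 0 \<omega> = (\<lambda>n. 0)"
| "compn (Suc m) \<omega> = stepc (\<omega> 0) (compn m (\<lambda>j. \<omega> (Suc j)))"

definition Phi0 :: "(nat \<Rightarrow> bool \<times> (nat \<Rightarrow> real)) \<Rightarrow> nat \<Rightarrow> real" where
  "Phi0 \<omega> = (\<lambda>n. SUP m. compn m \<omega> n)"

lemma clampr_bnd: "0 \<le> clampr x" "clampr x \<le> 1" unfolding clampr_def by auto

lemma comp_bnd: "0 \<le> compn m \<omega> n \<and> compn m \<omega> n \<le> 1"
proof (induction m arbitrary: \<omega>)
  case 0 then show ?case by simp
next
  case (Suc m)
  then show ?case using clampr_bnd[of "snd (\<omega> 0) n"] by (auto simp: stepc_def)
qed

lemma stepc_mono: assumes "\<And>n. \<eta> n \<le> \<eta>' n" shows "stepc s \<eta> n \<le> stepc s \<eta>' n"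
  using assms[of n] unfolding stepc_def by (auto simp: le_max_iff_disj min_le_iff_disj)

lemma comp_mono: "compn m \<omega> n \<le> compn (Suc m) \<omega> n"
proof (induction m arbitrary: \<omega> n)
  case 0 then show ?case using clampr_bnd[of "snd (\<omega> 0) n"] by (auto simp: stepc_def)
next
  case (Suc m)
  have "compn (Suc m) \<omega> n = stepc (\<omega> 0) (compn m (\<lambda>j. \<omega> (Suc j))) n"
    by (simp only: compn.simps(2))
  moreover have "compn (Suc (Suc m)) \<omega> n = stepc (\<omega> 0) (compn (Suc m) (\<lambda>j. \<omega> (Suc j))) n"
    by (simp only: compn.simps(2)[of "Suc m" \<omega>])
  moreover have "stepc (\<omega> 0) (compn m (\<lambda>j. \<omega> (Suc j))) n \<le> stepc (\<omega> 0) (compn (Suc m) (\<lambda>j. \<omega> (Suc j))) n"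
    by (rule stepc_mono) (rule Suc.IH)
  ultimately show ?case by simp
qed

lemma comp_inc: "incseq (\<lambda>m. compn m \<omega> n)"
  by (rule incseq_SucI) (rule comp_mono)

lemma comp_bdd: "bdd_above (range (\<lambda>m. compn m \<omega> n))"
  using comp_bnd by (intro bdd_aboveI[where M=1]) auto

lemma Phi0_lim: "(\<lambda>m. compn m \<omega> n) \<longlonglongrightarrow> Phi0 \<omega> n"
  unfolding Phi0_def by (rule LIMSEQ_incseq_SUP[OF comp_bdd comp_inc])

lemma Phi0_bnd: "0 \<le> Phi0 \<omega> n \<and> Phi0 \<omega> n \<le> 1"
proof
  have "compn 0 \<omega> n \<le> Phi0 \<omega> n" unfolding Phi0_def by (rule cSUP_upper[OF UNIV_I comp_bdd])
  then show "0 \<le> Phi0 \<omega> n" by simp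
  show "Phi0 \<omega> n \<le> 1" unfolding Phi0_def by (rule cSUP_least) (auto simp: comp_bnd)
qed

lemma Phi0_space: "Phi0 \<omega> \<in> space state_space"
  unfolding space_ss using Phi0_bnd by auto

lemma Phi0_step: "Phi0 (case_nat s \<omega>) = stepc s (Phi0 \<omega>)"
proof
  fix n
  have "(\<lambda>m. compn (Suc m) (case_nat s \<omega>) n) \<longlonglongrightarrow> Phi0 (case_nat s \<omega>) n"
    by (rule LIMSEQ_Suc[OF Phi0_lim])
  moreover have "(\<lambda>m. compn (Suc m) (case_nat s \<omega>) n) = (\<lambda>m. stepc s (compn m \<omega>) n)"
    by (simp add: compn.simps(2)[of _ "case_nat s \<omega>"] del: compn.simps)
  moreover have "(\<lambda>m. stepc s (compn m \<omega>) n) \<longlonglongrightarrow> stepc s (Phi0 \<omega>) n"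
    unfolding stepc_def using Phi0_lim[of \<omega> n]
    by (auto intro!: tendsto_max tendsto_min tendsto_const)
  ultimately show "Phi0 (case_nat s \<omega>) n = stepc s (Phi0 \<omega>) n"
    using LIMSEQ_unique by metis
qed

definition Mstep :: "real \<Rightarrow> (bool \<times> (nat \<Rightarrow> real)) measure" where
  "Mstep p = measure_pmf (bernoulli_pmf p) \<Otimes>\<^sub>M unif_seq"

definition Omg :: "real \<Rightarrow> (nat \<Rightarrow> bool \<times> (nat \<Rightarrow> real)) measure" where
  "Omg p = PiM UNIV (\<lambda>_. Mstep p)"

lemma unif_seq_prob: "prob_space unif_seq"
  unfolding unif_seq_eq by (rule prob_space_PiM) (rule unif_prob)

lemma Mstep_prob: "prob_space (Mstep p)"
  unfolding Mstep_def by (rule prob_space_pair[OF measure_pmf.prob_space_axioms unif_seq_prob])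

lemma Omg_seq: "sequence_space (Mstep p)"
  by (simp add: sequence_space_def product_prob_space_def product_sigma_finite_def
    prob_space_imp_sigma_finite Mstep_prob product_prob_space_axioms_def)

lemma clampr_meas: "f \<in> borel_measurable X \<Longrightarrow> (\<lambda>x. clampr (f x)) \<in> borel_measurable X"
  unfolding clampr_def by (intro borel_measurable_max borel_measurable_min borel_measurable_const)

lemma stepc_coord_meas:
  assumes e: "e \<in> borel_measurable X" and c: "c \<in> borel_measurable X" and b: "{x \<in> space X. b x} \<in> sets X"
  shows "(\<lambda>x. if b x then max (e x) (clampr (c x)) else min (e x) (clampr (c x))) \<in> borel_measurable X"
  by (intro measurable_If borel_measurable_max borel_measurable_min e clampr_meas c b)

lemma unif_coord: "(\<lambda>U. U n) \<in> borel_measurable unif_seq"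
proof -
  have "(\<lambda>U. U n) \<in> measurable unif_seq unif" unfolding unif_seq_eq
    by (rule measurable_component_singleton) simp
  moreover have "(\<lambda>x. x) \<in> measurable unif borel"
    by (rule measurable_ident_sets) (simp add: unif_def)
  ultimately show ?thesis by (rule measurable_compose)
qed

lemma Omg_shift: "(\<lambda>\<omega> j. \<omega> (Suc j)) \<in> measurable (Omg p) (Omg p)"
  unfolding Omg_def by (rule measurable_PiM_single') (auto simp: space_PiM)

lemma Omg_c0: "(\<lambda>\<omega>. \<omega> 0) \<in> measurable (Omg p) (Mstep p)"
  unfolding Omg_def by (rule measurable_component_singleton) simp

lemma Mstep_fst: "fst \<in> measurable (Mstep p) (measure_pmf (bernoulli_pmf p))"
  unfolding Mstep_def by (rule measurable_fst)

lemma Mstep_snd: "snd \<in> measurable (Mstep p) unif_seq"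
  unfolding Mstep_def by (rule measurable_snd)

lemma Omg_b: "{\<omega> \<in> space (Omg p). fst (\<omega> 0)} \<in> sets (Omg p)"
proof -
  have m: "(\<lambda>\<omega>. fst (\<omega> 0)) \<in> measurable (Omg p) (measure_pmf (bernoulli_pmf p))"
    using measurable_compose[OF Omg_c0 Mstep_fst] by simp
  have "{\<omega> \<in> space (Omg p). fst (\<omega> 0)} = (\<lambda>\<omega>. fst (\<omega> 0)) -` {True} \<inter> space (Omg p)" by auto
  also have "\<dots> \<in> sets (Omg p)" by (rule measurable_sets[OF m]) simp
  finally show ?thesis .
qed

lemma Omg_c: "(\<lambda>\<omega>. snd (\<omega> 0) n) \<in> borel_measurable (Omg p)"
proof -
  have "(\<lambda>\<omega>. snd (\<omega> 0)) \<in> measurable (Omg p) unif_seq"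
    using measurable_compose[OF Omg_c0 Mstep_snd] by simp
  then show ?thesis by (rule measurable_compose[OF _ unif_coord])
qed

lemma compn_meas: "(\<lambda>\<omega>. compn m \<omega> n) \<in> borel_measurable (Omg p)"
proof (induction m arbitrary: n)
  case 0 then show ?case by simp
next
  case (Suc m)
  have e: "(\<lambda>\<omega>. compn m (\<lambda>j. \<omega> (Suc j)) n) \<in> borel_measurable (Omg p)"
    by (rule measurable_compose[OF Omg_shift Suc.IH])
  have "(\<lambda>\<omega>. compn (Suc m) \<omega> n) = (\<lambda>\<omega>. if fst (\<omega> 0) then max (compn m (\<lambda>j. \<omega> (Suc j)) n) (clampr (snd (\<omega> 0) n))
      else min (compn m (\<lambda>j. \<omega> (Suc j)) n) (clampr (snd (\<omega> 0) n)))"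
    by (simp add: stepc_def)
  also have "\<dots> \<in> borel_measurable (Omg p)"
    by (rule stepc_coord_meas[OF e Omg_c Omg_b])
  finally show ?case .
qed

lemma Phi0_meas: "Phi0 \<in> measurable (Omg p) state_space"
  unfolding state_space_def
proof (rule measurable_PiM_single')
  fix n
  show "(\<lambda>\<omega>. Phi0 \<omega> n) \<in> measurable (Omg p) (restrict_space borel {0..1})"
  proof (rule measurable_restrict_space2)
    show "(\<lambda>\<omega>. Phi0 \<omega> n) \<in> space (Omg p) \<rightarrow> {0..1}" using Phi0_bnd by auto
    show "(\<lambda>\<omega>. Phi0 \<omega> n) \<in> borel_measurable (Omg p)"
      by (rule borel_measurable_LIMSEQ_real[OF Phi0_lim compn_meas])
  qed
next
  show "(\<lambda>\<omega> n. Phi0 \<omega> n) \<in> space (Omg p) \<rightarrow> (\<Pi>\<^sub>E n\<in>UNIV. space (restrict_space borel {0..1::real}))"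
    using Phi0_bnd by (auto simp: space_restrict_space)
qed

lemma ss_coord: "(\<lambda>\<eta>. \<eta> n) \<in> borel_measurable state_space"
proof -
  have "(\<lambda>\<eta>. \<eta> n) \<in> measurable state_space (restrict_space borel {0..1::real})"
    unfolding state_space_def by (rule measurable_component_singleton) simp
  moreover have "(\<lambda>x. x) \<in> measurable (restrict_space borel {0..1::real}) borel"
    by (rule measurable_restrict_space1) (rule measurable_ident_sets[OF refl])
  ultimately show ?thesis by (rule measurable_compose)
qed

lemma stepc_meas_pair: "(\<lambda>x. stepc (snd x) (fst x)) \<in> measurable (state_space \<Otimes>\<^sub>M Mstep p) state_space"
proof -
have "(\<lambda>x. stepc (snd x) (fst x)) \<in> measurable (state_space \<Otimes>\<^sub>M Mstep p) (PiM UNIV (\<lambda>n. restrict_space borel {0..1::real}))"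
proof (rule measurable_PiM_single')
  fix n
  show "(\<lambda>x. stepc (snd x) (fst x) n) \<in> measurable (state_space \<Otimes>\<^sub>M Mstep p) (restrict_space borel {0..1})"
  proof (rule measurable_restrict_space2)
    show "(\<lambda>x. stepc (snd x) (fst x) n) \<in> space (state_space \<Otimes>\<^sub>M Mstep p) \<rightarrow> {0..1}"
      using clampr_bnd by (auto simp: space_pair_measure space_ss stepc_def le_max_iff_disj min_le_iff_disj)
    have e: "(\<lambda>x. fst x n) \<in> borel_measurable (state_space \<Otimes>\<^sub>M Mstep p)"
      by (rule measurable_compose[OF measurable_fst ss_coord])
    have c: "(\<lambda>x. snd (snd x) n) \<in> borel_measurable (state_space \<Otimes>\<^sub>M Mstep p)"
      by (rule measurable_compose[OF measurable_compose[OF measurable_snd Mstep_snd] unif_coord])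
    have bm: "(\<lambda>x. fst (snd x)) \<in> measurable (state_space \<Otimes>\<^sub>M Mstep p) (measure_pmf (bernoulli_pmf p))"
      by (rule measurable_compose[OF measurable_snd Mstep_fst])
    have b: "{x \<in> space (state_space \<Otimes>\<^sub>M Mstep p). fst (snd x)} \<in> sets (state_space \<Otimes>\<^sub>M Mstep p)"
    proof -
      have "{x \<in> space (state_space \<Otimes>\<^sub>M Mstep p). fst (snd x)} = (\<lambda>x. fst (snd x)) -` {True} \<inter> space (state_space \<Otimes>\<^sub>M Mstep p)" by auto
      also have "\<dots> \<in> sets (state_space \<Otimes>\<^sub>M Mstep p)" by (rule measurable_sets[OF bm]) simp
      finally show ?thesis .
    qed
    show "(\<lambda>x. stepc (snd x) (fst x) n) \<in> borel_measurable (state_space \<Otimes>\<^sub>M Mstep p)"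
      unfolding stepc_def by (rule stepc_coord_meas[OF e c b])
  qed
next
  show "(\<lambda>x n. stepc (snd x) (fst x) n) \<in> space (state_space \<Otimes>\<^sub>M Mstep p) \<rightarrow> (\<Pi>\<^sub>E n\<in>UNIV. space (restrict_space borel {0..1::real}))"
    using clampr_bnd by (auto simp: space_pair_measure space_ss stepc_def space_restrict_space le_max_iff_disj min_le_iff_disj)
qed
then show ?thesis unfolding state_space_def .
qed

definition Kp :: "real \<Rightarrow> (nat \<Rightarrow> real) set \<Rightarrow> (nat \<Rightarrow> real) \<Rightarrow> ennreal" where
  "Kp p A \<eta> = (\<integral>\<^sup>+s. indicator A (stepc s \<eta>) \<partial>Mstep p)"

lemma Kp_meas:
  assumes A: "A \<in> sets state_space"
  shows "Kp p A \<in> borel_measurable state_space"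
proof -
  have "(\<lambda>x. indicator A (stepc (snd x) (fst x)) :: ennreal) \<in> borel_measurable (state_space \<Otimes>\<^sub>M Mstep p)"
    by (rule measurable_compose[OF stepc_meas_pair borel_measurable_indicator[OF A]])
  then have "case_prod (\<lambda>\<eta> s. indicator A (stepc s \<eta>) :: ennreal) \<in> borel_measurable (state_space \<Otimes>\<^sub>M Mstep p)"
    unfolding case_prod_beta' .
  then have "(\<lambda>\<eta>. \<integral>\<^sup>+s. indicator A (stepc s \<eta>) \<partial>Mstep p) \<in> borel_measurable state_space"
    by (rule sigma_finite_measure.borel_measurable_nn_integral[OF prob_space_imp_sigma_finite[OF Mstep_prob]])
  then show ?thesis unfolding Kp_def[abs_def] .
qed

lemma max_clampr: "0 \<le> a \<Longrightarrow> a \<le> 1 \<Longrightarrow> x \<le> 1 \<Longrightarrow> max a x = max a (clampr x)"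
  unfolding clampr_def by auto

lemma min_clampr: "0 \<le> a \<Longrightarrow> a \<le> 1 \<Longrightarrow> 0 \<le> x \<Longrightarrow> min a x = min a (clampr x)"
  unfolding clampr_def by auto

lemma stepc_U_meas:
  assumes eta: "\<eta> \<in> space state_space"
  shows "(\<lambda>U. stepc (b, U) \<eta>) \<in> measurable unif_seq state_space"
proof -
  have "(\<lambda>U. (\<eta>, (b, U))) \<in> measurable unif_seq (state_space \<Otimes>\<^sub>M Mstep p)"
    unfolding Mstep_def
    by (intro measurable_Pair measurable_const eta measurable_ident_sets) auto
  from measurable_compose[OF this stepc_meas_pair] show ?thesis by simp
qed

lemma stepc_s_meas:
  assumes eta: "\<eta> \<in> space state_space"
  shows "(\<lambda>s. stepc s \<eta>) \<in> measurable (Mstep p) state_space"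
proof -
  have "(\<lambda>s. (\<eta>, s)) \<in> measurable (Mstep p) (state_space \<Otimes>\<^sub>M Mstep p)"
    by (intro measurable_Pair measurable_const eta measurable_ident_sets) auto
  from measurable_compose[OF this stepc_meas_pair] show ?thesis by simp
qed

lemma unif_le1: "{U \<in> space unif_seq. \<forall>n. U n \<le> 1} \<in> sets unif_seq"
  unfolding unif_seq_eq by measurable (auto simp: unif_def)

lemma unif_ge0: "{U \<in> space unif_seq. \<forall>n. 0 \<le> U n} \<in> sets unif_seq"
  unfolding unif_seq_eq by measurable (auto simp: unif_def)

lemma nn_ind_U:
  assumes eta: "\<eta> \<in> space state_space" and A: "A \<in> sets state_space"
  shows "(\<integral>\<^sup>+U. indicator A (stepc (b, U) \<eta>) \<partial>unif_seq) = emeasure unif_seq ((\<lambda>U. stepc (b, U) \<eta>) -` A \<inter> space unif_seq)"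
proof -
  have "(\<integral>\<^sup>+U. indicator A (stepc (b, U) \<eta>) \<partial>unif_seq) = (\<integral>\<^sup>+U. indicator ((\<lambda>U. stepc (b, U) \<eta>) -` A) U \<partial>unif_seq)"
    by (simp add: indicator_vimage)
  also have "\<dots> = emeasure unif_seq ((\<lambda>U. stepc (b, U) \<eta>) -` A \<inter> space unif_seq)"
    by (rule nn_integral_indicator') (rule measurable_sets[OF stepc_U_meas[OF eta] A])
  finally show ?thesis .
qed

lemma Kp_trans:
  assumes eta: "\<eta> \<in> space state_space" and A: "A \<in> sets state_space" and p: "0 \<le> p" "p \<le> 1"
  shows "Kp p A \<eta> = trans_prob p \<eta> A"
proof -
  have Asub: "A \<subseteq> space state_space" using A by (rule sets.sets_into_space)
  have e01: "0 \<le> \<eta> n \<and> \<eta> n \<le> 1" for n using eta unfolding space_ss by auto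
  have fm: "(\<lambda>s. indicator A (stepc s \<eta>) :: ennreal) \<in> borel_measurable (Mstep p)"
    by (rule measurable_compose[OF stepc_s_meas[OF eta] borel_measurable_indicator[OF A]])
  have "Kp p A \<eta> = (\<integral>\<^sup>+b. \<integral>\<^sup>+U. indicator A (stepc (b, U) \<eta>) \<partial>unif_seq \<partial>measure_pmf (bernoulli_pmf p))"
    unfolding Kp_def
    using sigma_finite_measure.nn_integral_fst[OF prob_space_imp_sigma_finite[OF unif_seq_prob], of "\<lambda>s. indicator A (stepc s \<eta>)" "measure_pmf (bernoulli_pmf p)"]
      fm unfolding Mstep_def by simp
  also have "\<dots> = (\<integral>\<^sup>+U. indicator A (stepc (True, U) \<eta>) \<partial>unif_seq) * ennreal p +
      (\<integral>\<^sup>+U. indicator A (stepc (False, U) \<eta>) \<partial>unif_seq) * ennreal (1 - p)"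
    using p by (subst nn_integral_bernoulli_pmf) auto
  also have "(\<integral>\<^sup>+U. indicator A (stepc (True, U) \<eta>) \<partial>unif_seq) =
      emeasure unif_seq {U \<in> space unif_seq. (\<lambda>n. max (\<eta> n) (U n)) \<in> A}"
  proof -
    have eqs: "{U \<in> space unif_seq. (\<lambda>n. max (\<eta> n) (U n)) \<in> A} =
        {U \<in> space unif_seq. \<forall>n. U n \<le> 1} \<inter> ((\<lambda>U. stepc (True, U) \<eta>) -` A \<inter> space unif_seq)"
    proof (intro equalityI subsetI)
      fix U assume U: "U \<in> {U \<in> space unif_seq. (\<lambda>n. max (\<eta> n) (U n)) \<in> A}"
      then have "(\<lambda>n. max (\<eta> n) (U n)) \<in> space state_space" using Asub by auto
      then have "\<forall>n. max (\<eta> n) (U n) \<le> 1" unfolding space_ss by auto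
      then have le: "\<forall>n. U n \<le> 1" by simp
      then have "stepc (True, U) \<eta> = (\<lambda>n. max (\<eta> n) (U n))"
        unfolding stepc_def using e01 max_clampr by auto
      then show "U \<in> {U \<in> space unif_seq. \<forall>n. U n \<le> 1} \<inter> ((\<lambda>U. stepc (True, U) \<eta>) -` A \<inter> space unif_seq)"
        using U le by auto
    next
      fix U assume U: "U \<in> {U \<in> space unif_seq. \<forall>n. U n \<le> 1} \<inter> ((\<lambda>U. stepc (True, U) \<eta>) -` A \<inter> space unif_seq)"
      then have le: "\<forall>n. U n \<le> 1" by auto
      then have "stepc (True, U) \<eta> = (\<lambda>n. max (\<eta> n) (U n))"
        unfolding stepc_def using e01 max_clampr by auto
      then show "U \<in> {U \<in> space unif_seq. (\<lambda>n. max (\<eta> n) (U n)) \<in> A}" using U by auto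
    qed
    have s2: "(\<lambda>U. stepc (True, U) \<eta>) -` A \<inter> space unif_seq \<in> sets unif_seq"
      by (rule measurable_sets[OF stepc_U_meas[OF eta] A])
    have "emeasure unif_seq ((\<lambda>U. stepc (True, U) \<eta>) -` A \<inter> space unif_seq) =
        emeasure unif_seq {U \<in> space unif_seq. (\<lambda>n. max (\<eta> n) (U n)) \<in> A}"
    proof (rule emeasure_eq_AE)
      show "AE x in unif_seq. (x \<in> (\<lambda>U. stepc (True, U) \<eta>) -` A \<inter> space unif_seq) =
          (x \<in> {U \<in> space unif_seq. (\<lambda>n. max (\<eta> n) (U n)) \<in> A})"
        using AE_unif01 by eventually_elim (auto simp: eqs)
      show "(\<lambda>U. stepc (True, U) \<eta>) -` A \<inter> space unif_seq \<in> sets unif_seq" by (rule s2)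
      show "{U \<in> space unif_seq. (\<lambda>n. max (\<eta> n) (U n)) \<in> A} \<in> sets unif_seq"
        unfolding eqs using unif_le1 s2 by (rule sets.Int)
    qed
    then show ?thesis using nn_ind_U[OF eta A] by simp
  qed
  also have "(\<integral>\<^sup>+U. indicator A (stepc (False, U) \<eta>) \<partial>unif_seq) =
      emeasure unif_seq {U \<in> space unif_seq. (\<lambda>n. min (\<eta> n) (U n)) \<in> A}"
  proof -
    have eqs: "{U \<in> space unif_seq. (\<lambda>n. min (\<eta> n) (U n)) \<in> A} =
        {U \<in> space unif_seq. \<forall>n. 0 \<le> U n} \<inter> ((\<lambda>U. stepc (False, U) \<eta>) -` A \<inter> space unif_seq)"
    proof (intro equalityI subsetI)
      fix U assume U: "U \<in> {U \<in> space unif_seq. (\<lambda>n. min (\<eta> n) (U n)) \<in> A}"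
      then have "(\<lambda>n. min (\<eta> n) (U n)) \<in> space state_space" using Asub by auto
      then have "\<forall>n. 0 \<le> min (\<eta> n) (U n)" unfolding space_ss by auto
      then have le: "\<forall>n. 0 \<le> U n" by simp
      then have "stepc (False, U) \<eta> = (\<lambda>n. min (\<eta> n) (U n))"
        unfolding stepc_def using e01 min_clampr by auto
      then show "U \<in> {U \<in> space unif_seq. \<forall>n. 0 \<le> U n} \<inter> ((\<lambda>U. stepc (False, U) \<eta>) -` A \<inter> space unif_seq)"
        using U le by auto
    next
      fix U assume U: "U \<in> {U \<in> space unif_seq. \<forall>n. 0 \<le> U n} \<inter> ((\<lambda>U. stepc (False, U) \<eta>) -` A \<inter> space unif_seq)"
      then have le: "\<forall>n. 0 \<le> U n" by auto
      then have "stepc (False, U) \<eta> = (\<lambda>n. min (\<eta> n) (U n))"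
        unfolding stepc_def using e01 min_clampr by auto
      then show "U \<in> {U \<in> space unif_seq. (\<lambda>n. min (\<eta> n) (U n)) \<in> A}" using U by auto
    qed
    have s2: "(\<lambda>U. stepc (False, U) \<eta>) -` A \<inter> space unif_seq \<in> sets unif_seq"
      by (rule measurable_sets[OF stepc_U_meas[OF eta] A])
    have "emeasure unif_seq ((\<lambda>U. stepc (False, U) \<eta>) -` A \<inter> space unif_seq) =
        emeasure unif_seq {U \<in> space unif_seq. (\<lambda>n. min (\<eta> n) (U n)) \<in> A}"
    proof (rule emeasure_eq_AE)
      show "AE x in unif_seq. (x \<in> (\<lambda>U. stepc (False, U) \<eta>) -` A \<inter> space unif_seq) =
          (x \<in> {U \<in> space unif_seq. (\<lambda>n. min (\<eta> n) (U n)) \<in> A})"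
        using AE_unif01 by eventually_elim (auto simp: eqs)
      show "(\<lambda>U. stepc (False, U) \<eta>) -` A \<inter> space unif_seq \<in> sets unif_seq" by (rule s2)
      show "{U \<in> space unif_seq. (\<lambda>n. min (\<eta> n) (U n)) \<in> A} \<in> sets unif_seq"
        unfolding eqs using unif_ge0 s2 by (rule sets.Int)
    qed
    then show ?thesis using nn_ind_U[OF eta A] by simp
  qed
  finally show ?thesis unfolding trans_prob_def by (simp add: mult.commute)
qed

lemma Omg_prob: "prob_space (Omg p)"
  unfolding Omg_def by (rule prob_space_PiM) (rule Mstep_prob)

lemma pi0_stat:
  assumes p: "0 \<le> p" "p \<le> 1"
  shows "stationary p (distr (Omg p) state_space Phi0)"
  unfolding stationary_def
proof (intro conjI ballI)
  show "prob_space (distr (Omg p) state_space Phi0)"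
    by (rule prob_space.prob_space_distr[OF Omg_prob Phi0_meas])
  show "sets (distr (Omg p) state_space Phi0) = sets state_space" by simp
  fix A assume A: "A \<in> sets state_space"
  have gm: "(\<lambda>\<omega>. indicator A (Phi0 \<omega>) :: ennreal) \<in> borel_measurable (Omg p)"
    by (rule measurable_compose[OF Phi0_meas borel_measurable_indicator[OF A]])
  have "emeasure (distr (Omg p) state_space Phi0) A = (\<integral>\<^sup>+\<eta>. indicator A \<eta> \<partial>distr (Omg p) state_space Phi0)"
    using A by simp
  also have "\<dots> = (\<integral>\<^sup>+\<omega>. indicator A (Phi0 \<omega>) \<partial>Omg p)"
    by (rule nn_integral_distr[OF Phi0_meas]) (use A in simp)
  also have "\<dots> = (\<integral>\<^sup>+\<omega>. \<integral>\<^sup>+s. indicator A (Phi0 (case_nat s \<omega>)) \<partial>Mstep p \<partial>Omg p)"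
    using sequence_space.L_nn[OF Omg_seq, of "\<lambda>\<omega>. indicator A (Phi0 \<omega>)" p] gm unfolding Omg_def by simp
  also have "\<dots> = (\<integral>\<^sup>+\<omega>. Kp p A (Phi0 \<omega>) \<partial>Omg p)"
    unfolding Kp_def Phi0_step ..
  also have "\<dots> = (\<integral>\<^sup>+\<eta>. Kp p A \<eta> \<partial>distr (Omg p) state_space Phi0)"
    by (rule nn_integral_distr[OF Phi0_meas, symmetric]) (use Kp_meas[OF A] in simp)
  also have "\<dots> = (\<integral>\<^sup>+\<eta>. trans_prob p \<eta> A \<partial>distr (Omg p) state_space Phi0)"
    by (rule nn_integral_cong) (simp add: Kp_trans[OF _ A p])
  finally show "emeasure (distr (Omg p) state_space Phi0) A = (\<integral>\<^sup>+\<eta>. trans_prob p \<eta> A \<partial>distr (Omg p) state_space Phi0)" .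
qed

lemma orth_formula:
  assumes p: "0 < p" "p < 1" and st: "stationary p \<pi>" and u: "\<forall>n<N. 0 \<le> u n \<and> u n \<le> 1"
  shows "measure \<pi> (orth N u) = Fstar p N u"
  using rec_unique[OF p stat_rec[OF st p] Fstar_rec[OF p] u] .

lemma orth_agree:
  assumes p: "0 < p" "p < 1" and st1: "stationary p \<pi>1" and st2: "stationary p \<pi>2"
  shows "measure \<pi>1 (orth N u) = measure \<pi>2 (orth N u)"
proof (cases "\<exists>n<N. u n < 0")
  case True
  then have "orth N u = {}" unfolding orth_def by force
  then show ?thesis by simp
next
  case False
  define v where "v n = min (u n) 1" for n
  have v: "\<forall>n<N. 0 \<le> v n \<and> v n \<le> 1" using False unfolding v_def by auto
  have "orth N u = orth N v" unfolding orth_def v_def space_ss by auto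
  then show ?thesis using orth_formula[OF p st1 v] orth_formula[OF p st2 v] by simp
qed

theorem corollary1:
  fixes p :: real
  assumes "0 < p" and "p < 1"
  shows "(\<exists>!\<pi>. stationary p \<pi>) \<and>
         (\<forall>\<pi>. stationary p \<pi> \<longrightarrow>
            (\<forall>(N::nat) (u::nat \<Rightarrow> real). (\<forall>n<N. 0 \<le> u n \<and> u n \<le> 1) \<longrightarrow>
               measure \<pi> {\<eta> \<in> space state_space. \<forall>n<N. 0 \<le> \<eta> n \<and> \<eta> n \<le> u n}
               = (\<integral>G. (\<Prod>n<N. Theta_inf G (u n)) \<partial>G_space p)))"
proof (intro conjI allI impI)
  have p: "0 < p" "p < 1" by fact+
  show "\<exists>!\<pi>. stationary p \<pi>"
  proof (rule ex_ex1I)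
    show "\<exists>\<pi>. stationary p \<pi>" using pi0_stat[of p] p by auto
    fix \<pi>1 \<pi>2 assume st1: "stationary p \<pi>1" and st2: "stationary p \<pi>2"
    show "\<pi>1 = \<pi>2"
    proof (rule measure_unique_orth)
      show "prob_space \<pi>1" "sets \<pi>1 = sets state_space" using st1 unfolding stationary_def by auto
      show "prob_space \<pi>2" "sets \<pi>2 = sets state_space" using st2 unfolding stationary_def by auto
      show "\<And>N u. measure \<pi>1 (orth N u) = measure \<pi>2 (orth N u)"
        by (rule orth_agree[OF p st1 st2])
    qed
  qed
next
  fix \<pi> N and u :: "nat \<Rightarrow> real"
  assume st: "stationary p \<pi>" and u: "\<forall>n<N. 0 \<le> u n \<and> u n \<le> 1"
  have p: "0 < p" "p < 1" by fact+
  show "measure \<pi> {\<eta> \<in> space state_space. \<forall>n<N. 0 \<le> \<eta> n \<and> \<eta> n \<le> u n}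
               = (\<integral>G. (\<Prod>n<N. Theta_inf G (u n)) \<partial>G_space p)"
    using orth_formula[OF p st u] unfolding orth_def Fstar_def .
qed

end
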